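(* Let ${\mathcal G}=(B\cup W,E)$ be a finite bipartite graph embedded in the plane, each of whose bounded faces is bounded by a simple cycle, with vertex multiplicities $\mathbf n$, a choice of cilia, and a Kasteleyn sign function $\epsilon:E\to\{\pm1\}$ (definitions in the context). Let $\gamma$ be a simple closed cycle in ${\mathcal G}$ of length $L$ (number of edges). Then $$\prod_{e\in\gamma}\epsilon_e=(-1)^{L/2+1+k+n_{\mathrm{int}}},$$ where $k$ is the number of vertices $v$ on $\gamma$ with $n_v$ even whose cilium lies in the region enclosed by $\gamma$, and $n_{\mathrm{int}}=\sum n_v$ is the sum of the multiplicities of all vertices lying strictly inside the region enclosed by $\gamma$.
   Context: A vertex multiplicity is a function $\mathbf n:B\cup W\to\mathbb Z_{>0}$, $v\mapsto n_v$. A choice of cilia assigns to each vertex $v$ a cilium: a distinguished angular sector (wedge) at $v$ between two cyclically consecutive incident edges; the cilium of $v$ "lies in" the face containing that wedge. A Kasteleyn sign function is a map $\epsilon:E\to\{\pm1\}$ such that for every bounded face $f$ of ${\mathcal G}$, whose boundary has length $2\ell$, one has $\prod_{e\in\partial f}\epsilon_e=(-1)^{\ell+1+k_f}$, where $k_f$ is the number of vertices $v$ on $\partial f$ with $n_v$ even whose cilium lies in $f$. *)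

theory Defs
  imports "HOL-Analysis.Analysis"
begin

text \<open>It is embedded in the plane (identified with the complex numbers):
  vertex v is drawn at pos v, edge e is drawn as the arc g e from pos (bl e)
  to pos (wh e).\<close>

definition graph_set ::
  "'v set \<Rightarrow> 'e set \<Rightarrow> ('v \<Rightarrow> complex) \<Rightarrow> ('e \<Rightarrow> real \<Rightarrow> complex) \<Rightarrow> complex set" where
  "graph_set V E pos g = pos ` V \<union> (\<Union>e\<in>E. path_image (g e))"

definition plane_bipartite_graph ::
  "'v set \<Rightarrow> 'v set \<Rightarrow> 'e set \<Rightarrow> ('e \<Rightarrow> 'v) \<Rightarrow> ('e \<Rightarrow> 'v)
   \<Rightarrow> ('v \<Rightarrow> complex) \<Rightarrow> ('e \<Rightarrow> real \<Rightarrow> complex) \<Rightarrow> bool" where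
  "plane_bipartite_graph B W E bl wh pos g \<longleftrightarrow>
     finite B \<and> finite W \<and> finite E \<and> B \<inter> W = {} \<and>
     (\<forall>e\<in>E. bl e \<in> B \<and> wh e \<in> W) \<and>
     (\<forall>e\<in>E. \<forall>e'\<in>E. bl e = bl e' \<and> wh e = wh e' \<longrightarrow> e = e') \<and>
     inj_on pos (B \<union> W) \<and>
     (\<forall>e\<in>E. arc (g e) \<and> pathstart (g e) = pos (bl e) \<and> pathfinish (g e) = pos (wh e)) \<and>
     (\<forall>e\<in>E. \<forall>v\<in>B \<union> W. pos v \<in> path_image (g e) \<longrightarrow> v = bl e \<or> v = wh e) \<and>
     (\<forall>e\<in>E. \<forall>e'\<in>E. e \<noteq> e' \<longrightarrow>
        path_image (g e) \<inter> path_image (g e') \<subseteq> pos ` ({bl e, wh e} \<inter> {bl e', wh e'}))"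

definition simple_cycle ::
  "'e set \<Rightarrow> ('e \<Rightarrow> 'v) \<Rightarrow> ('e \<Rightarrow> 'v) \<Rightarrow> 'v list \<Rightarrow> 'e list \<Rightarrow> bool" where
  "simple_cycle E bl wh vs es \<longleftrightarrow>
     length vs = length es \<and> 2 \<le> length es \<and> distinct vs \<and> distinct es \<and> set es \<subseteq> E \<and>
     (\<forall>i<length es. {bl (es!i), wh (es!i)} = {vs!i, vs!((i+1) mod length es)})"

definition cycle_image :: "('e \<Rightarrow> real \<Rightarrow> complex) \<Rightarrow> 'e list \<Rightarrow> complex set" where
  "cycle_image g es = (\<Union>e\<in>set es. path_image (g e))"

text \<open>Faces are the connected components of the complement of the drawing.
  Every bounded face is bounded by a simple cycle.\<close>

definition bounded_faces_simple ::
  "'v set \<Rightarrow> 'v set \<Rightarrow> 'e set \<Rightarrow> ('e \<Rightarrow> 'v) \<Rightarrow> ('e \<Rightarrow> 'v)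
   \<Rightarrow> ('v \<Rightarrow> complex) \<Rightarrow> ('e \<Rightarrow> real \<Rightarrow> complex) \<Rightarrow> bool" where
  "bounded_faces_simple B W E bl wh pos g \<longleftrightarrow>
     (\<forall>f\<in>components (- graph_set (B \<union> W) E pos g). bounded f \<longrightarrow>
        (\<exists>vs es. simple_cycle E bl wh vs es \<and> frontier f = cycle_image g es))"

definition face_edges ::
  "'e set \<Rightarrow> ('e \<Rightarrow> real \<Rightarrow> complex) \<Rightarrow> complex set \<Rightarrow> 'e set" where
  "face_edges E g f = {e\<in>E. path_image (g e) \<subseteq> frontier f}"

text \<open>A choice of cilia: the cilium at v is represented by a short straight segment from
  pos v to the point cil v which meets the drawing only at pos v; it therefore
  lies in a single angular sector (wedge) at v, and it lies in the face containing cil v.\<close>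

definition valid_cilia ::
  "'v set \<Rightarrow> 'e set \<Rightarrow> ('v \<Rightarrow> complex) \<Rightarrow> ('e \<Rightarrow> real \<Rightarrow> complex) \<Rightarrow> ('v \<Rightarrow> complex) \<Rightarrow> bool" where
  "valid_cilia V E pos g cil \<longleftrightarrow>
     (\<forall>v\<in>V. cil v \<noteq> pos v \<and> closed_segment (pos v) (cil v) \<inter> graph_set V E pos g = {pos v})"

definition kasteleyn ::
  "'v set \<Rightarrow> 'e set \<Rightarrow> ('v \<Rightarrow> complex) \<Rightarrow> ('e \<Rightarrow> real \<Rightarrow> complex)
   \<Rightarrow> ('v \<Rightarrow> nat) \<Rightarrow> ('v \<Rightarrow> complex) \<Rightarrow> ('e \<Rightarrow> int) \<Rightarrow> bool" where
  "kasteleyn V E pos g n cil \<epsilon> \<longleftrightarrow>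
     (\<forall>e\<in>E. \<epsilon> e = 1 \<or> \<epsilon> e = -1) \<and>
     (\<forall>f\<in>components (- graph_set V E pos g). bounded f \<longrightarrow>
        (\<Prod>e\<in>face_edges E g f. \<epsilon> e) =
          (-1) ^ (card (face_edges E g f) div 2 + 1 +
                  card {v\<in>V. pos v \<in> frontier f \<and> even (n v) \<and> cil v \<in> f}))"

end

theory Submission
  imports Defs
begin

definition walk :: "'e set \<Rightarrow> ('e \<Rightarrow> 'v) \<Rightarrow> ('e \<Rightarrow> 'v) \<Rightarrow> 'v list \<Rightarrow> 'e list \<Rightarrow> bool" where
  "walk E bl wh vs es \<longleftrightarrow> length vs = Suc (length es) \<and> distinct vs \<and> distinct es \<and> set es \<subseteq> E \<and>
     (\<forall>i<length es. {bl (es!i), wh (es!i)} = {vs!i, vs!Suc i})"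

lemma walk_Nil: "walk E bl wh vs [] \<longleftrightarrow> (\<exists>v. vs = [v])"
  unfolding walk_def by (cases vs) auto

lemma walk_Cons:
  "walk E bl wh (v#vs) (e#es) \<longleftrightarrow>
     walk E bl wh vs es \<and> v \<notin> set vs \<and> e \<notin> set es \<and> e \<in> E \<and> {bl e, wh e} = {v, hd vs}"
proof
  assume w: "walk E bl wh (v#vs) (e#es)"
  then have l: "length vs = Suc (length es)" by (simp add: walk_def)
  then obtain u us where vs: "vs = u # us" by (cases vs) auto
  have a: "\<forall>i<Suc (length es). {bl ((e#es)!i), wh ((e#es)!i)} = {(v#vs)!i, (v#vs)!Suc i}"
    using w by (simp add: walk_def)
  have "\<forall>i<length es. {bl (es!i), wh (es!i)} = {vs!i, vs!Suc i}"
  proof (intro allI impI)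
    fix i assume "i < length es"
    then show "{bl (es!i), wh (es!i)} = {vs!i, vs!Suc i}" using a[rule_format, of "Suc i"] by simp
  qed
  moreover have "{bl e, wh e} = {v, hd vs}" using a[rule_format, of 0] vs by simp
  ultimately show "walk E bl wh vs es \<and> v \<notin> set vs \<and> e \<notin> set es \<and> e \<in> E \<and> {bl e, wh e} = {v, hd vs}"
    using w l by (simp add: walk_def)
next
  assume r: "walk E bl wh vs es \<and> v \<notin> set vs \<and> e \<notin> set es \<and> e \<in> E \<and> {bl e, wh e} = {v, hd vs}"
  then have l: "length vs = Suc (length es)" by (simp add: walk_def)
  then obtain u us where vs: "vs = u # us" by (cases vs) auto
  have "\<forall>i<Suc (length es). {bl ((e#es)!i), wh ((e#es)!i)} = {(v#vs)!i, (v#vs)!Suc i}"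
  proof (intro allI impI)
    fix i assume i: "i < Suc (length es)"
    show "{bl ((e#es)!i), wh ((e#es)!i)} = {(v#vs)!i, (v#vs)!Suc i}"
    proof (cases i)
      case 0 then show ?thesis using r vs by simp
    next
      case (Suc j) then show ?thesis using r i by (simp add: walk_def)
    qed
  qed
  then show "walk E bl wh (v#vs) (e#es)" using r l by (simp add: walk_def)
qed

lemma walk_lengthD: "walk E bl wh vs es \<Longrightarrow> length vs = Suc (length es)"
  by (simp add: walk_def)

lemma walk_distinct: "walk E bl wh vs es \<Longrightarrow> distinct vs" "walk E bl wh vs es \<Longrightarrow> distinct es"
  "walk E bl wh vs es \<Longrightarrow> set es \<subseteq> E"
  by (simp_all add: walk_def)

lemma walk_edge: "walk E bl wh vs es \<Longrightarrow> i < length es \<Longrightarrow> {bl (es!i), wh (es!i)} = {vs!i, vs!Suc i}"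
  by (simp add: walk_def)

lemma walk_append1:
  "walk E bl wh (vs @ [v]) (es @ [e]) \<longleftrightarrow>
     walk E bl wh vs es \<and> v \<notin> set vs \<and> e \<notin> set es \<and> e \<in> E \<and> {bl e, wh e} = {last vs, v}"
proof
  assume w: "walk E bl wh (vs @ [v]) (es @ [e])"
  then have l: "length vs = Suc (length es)" by (simp add: walk_def)
  then have ne: "vs \<noteq> []" by auto
  have a: "\<forall>i<Suc (length es). {bl ((es@[e])!i), wh ((es@[e])!i)} = {(vs@[v])!i, (vs@[v])!Suc i}"
    using w by (simp add: walk_def)
  have "\<forall>i<length es. {bl (es!i), wh (es!i)} = {vs!i, vs!Suc i}"
  proof (intro allI impI)
    fix i assume "i < length es"
    then show "{bl (es!i), wh (es!i)} = {vs!i, vs!Suc i}" using a[rule_format, of i] l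
      by (simp add: nth_append)
  qed
  moreover have "{bl e, wh e} = {last vs, v}" using a[rule_format, of "length es"] l ne
    by (simp add: nth_append last_conv_nth)
  ultimately show "walk E bl wh vs es \<and> v \<notin> set vs \<and> e \<notin> set es \<and> e \<in> E \<and> {bl e, wh e} = {last vs, v}"
    using w l by (simp add: walk_def)
next
  assume r: "walk E bl wh vs es \<and> v \<notin> set vs \<and> e \<notin> set es \<and> e \<in> E \<and> {bl e, wh e} = {last vs, v}"
  then have l: "length vs = Suc (length es)" by (simp add: walk_def)
  then have ne: "vs \<noteq> []" by auto
  have "\<forall>i<Suc (length es). {bl ((es@[e])!i), wh ((es@[e])!i)} = {(vs@[v])!i, (vs@[v])!Suc i}"
  proof (intro allI impI)
    fix i assume i: "i < Suc (length es)"
    show "{bl ((es@[e])!i), wh ((es@[e])!i)} = {(vs@[v])!i, (vs@[v])!Suc i}"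
    proof (cases "i = length es")
      case True then show ?thesis using r l ne by (simp add: nth_append last_conv_nth)
    next
      case False then have "i < length es" using i by simp
      then show ?thesis using r l by (simp add: nth_append walk_def)
    qed
  qed
  then show "walk E bl wh (vs @ [v]) (es @ [e])" using r l by (simp add: walk_def)
qed

lemma walk_rev: "walk E bl wh vs es \<Longrightarrow> walk E bl wh (rev vs) (rev es)"
proof (induction es arbitrary: vs)
  case Nil then show ?case by (auto simp: walk_Nil)
next
  case (Cons e es)
  then obtain v us where vs: "vs = v # us" by (cases vs) (auto simp: walk_def)
  with Cons.prems have w: "walk E bl wh us es" "v \<notin> set us" "e \<notin> set es" "e \<in> E" "{bl e, wh e} = {v, hd us}"
    by (simp_all add: walk_Cons)
  have "us \<noteq> []" using w(1) by (auto simp: walk_def)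
  then have "last (rev us) = hd us" by (simp add: last_rev)
  then show ?case using Cons.IH[OF w(1)] w vs by (simp add: walk_append1 insert_commute)
qed

lemma walk_verts:
  assumes "walk E bl wh vs es" "es \<noteq> []"
  shows "set vs = (\<Union>e\<in>set es. {bl e, wh e})"
  using assms
proof (induction es arbitrary: vs)
  case Nil then show ?case by simp
next
  case (Cons e es)
  then obtain v us where vs: "vs = v # us" by (cases vs) (auto simp: walk_def)
  with Cons.prems have w: "walk E bl wh us es" "{bl e, wh e} = {v, hd us}"
    by (simp_all add: walk_Cons)
  show ?case
  proof (cases "es = []")
    case True
    then obtain u where "us = [u]" using w(1) by (auto simp: walk_Nil)
    then show ?thesis using vs w True by auto
  next
    case False
    have "us \<noteq> []" using w(1) by (auto simp: walk_def)
    then have "hd us \<in> set us" by simp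
    then show ?thesis using Cons.IH[OF w(1) False] vs w(2) by auto
  qed
qed

lemma walk_take:
  assumes "walk E bl wh vs es" "j \<le> length es"
  shows "walk E bl wh (take (Suc j) vs) (take j es)"
  using assms by (auto simp: walk_def distinct_take intro: set_take_subset[THEN subsetD])

lemma walk_drop:
  assumes "walk E bl wh vs es" "j \<le> length es"
  shows "walk E bl wh (drop j vs) (drop j es)"
  using assms by (auto simp: walk_def distinct_drop intro: set_drop_subset[THEN subsetD])

lemma nth_closeup: "i < length vs \<Longrightarrow> (vs @ [hd vs]) ! Suc i = vs ! (Suc i mod length vs)"
proof -
  assume i: "i < length vs"
  show ?thesis
  proof (cases "Suc i < length vs")
    case True then show ?thesis by (simp add: nth_append)
  next
    case False then have "Suc i = length vs" using i by simp
    moreover have "vs \<noteq> []" using i by auto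
    ultimately show ?thesis using i by (simp add: nth_append hd_conv_nth)
  qed
qed

lemma simple_cycle_alt:
  "simple_cycle E bl wh vs es \<longleftrightarrow> length vs = length es \<and> 2 \<le> length es \<and> distinct vs \<and> distinct es \<and>
     set es \<subseteq> E \<and> (\<forall>i<length es. {bl (es!i), wh (es!i)} = {(vs @ [hd vs])!i, (vs @ [hd vs])!Suc i})"
proof -
  have "length vs = length es \<Longrightarrow> i < length es \<Longrightarrow>
        {(vs @ [hd vs])!i, (vs @ [hd vs])!Suc i} = {vs!i, vs!((i+1) mod length es)}" for i
    using nth_closeup[of i vs] by (simp add: nth_append)
  then have "length vs = length es \<Longrightarrow>
     (\<forall>i<length es. {bl (es!i), wh (es!i)} = {(vs @ [hd vs])!i, (vs @ [hd vs])!Suc i}) \<longleftrightarrow>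
     (\<forall>i<length es. {bl (es!i), wh (es!i)} = {vs!i, vs!((i+1) mod length es)})" by simp
  then show ?thesis unfolding simple_cycle_def by blast
qed

lemma cycle_split:
  assumes c: "simple_cycle E bl wh vs es" and b: "0 < b" "b < length es"
  shows "walk E bl wh (take (Suc b) vs) (take b es)"
    and "walk E bl wh (drop b vs @ [hd vs]) (drop b es)"
proof -
  let ?Y = "vs @ [hd vs]"
  have l: "length vs = length es" and d: "distinct vs" "distinct es" and s: "set es \<subseteq> E"
    and cond: "\<forall>i<length es. {bl (es!i), wh (es!i)} = {?Y!i, ?Y!Suc i}"
    using c by (simp_all add: simple_cycle_alt)
  have t: "take (Suc b) vs = take (Suc b) ?Y" using b l by simp
  show "walk E bl wh (take (Suc b) vs) (take b es)"
    unfolding walk_def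
  proof (intro conjI allI impI)
    fix i assume "i < length (take b es)"
    then have "i < b" by simp
    then show "{bl (take b es ! i), wh (take b es ! i)} = {take (Suc b) vs ! i, take (Suc b) vs ! Suc i}"
      using cond b l by (simp add: nth_append)
  qed (use b l d s in \<open>auto dest: in_set_takeD\<close>)
  have dd: "drop b vs @ [hd vs] = drop b ?Y" using b l by simp
  have hd_notin: "hd vs \<notin> set (drop b vs)"
  proof
    assume "hd vs \<in> set (drop b vs)"
    then obtain k where k: "k < length (drop b vs)" "drop b vs ! k = hd vs" by (auto simp: in_set_conv_nth)
    moreover have "vs \<noteq> []" using b l by auto
    ultimately have "vs ! (b + k) = vs ! 0" using b l by (simp add: hd_conv_nth)
    moreover have "b + k < length vs" using k by simp
    ultimately have "b + k = 0" using d(1) nth_eq_iff_index_eq by fastforce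
    then show False using b by simp
  qed
  show "walk E bl wh (drop b vs @ [hd vs]) (drop b es)"
    unfolding walk_def
  proof (intro conjI allI impI)
    fix i assume "i < length (drop b es)"
    then have "b + i < length es" by simp
    then show "{bl (drop b es ! i), wh (drop b es ! i)} = {(drop b vs @ [hd vs]) ! i, (drop b vs @ [hd vs]) ! Suc i}"
    proof -
      have dn: "(drop b vs @ [hd vs]) ! k = ?Y ! (b + k)" for k
        unfolding dd using b l by (intro nth_drop) simp
      show ?thesis unfolding dn using cond \<open>b + i < length es\<close> by simp
    qed
  qed (use b l d s hd_notin in \<open>auto dest: in_set_dropD\<close>)
qed

lemma cycle_join:
  assumes A: "walk E bl wh vsA esA" and Bw: "walk E bl wh vsB esB"
    and ne: "esA \<noteq> []" "esB \<noteq> []"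
    and e1: "last vsA = hd vsB" and e2: "last vsB = hd vsA"
    and vint: "set vsA \<inter> set vsB \<subseteq> {hd vsA, hd vsB}"
    and eint: "set esA \<inter> set esB = {}"
  shows "simple_cycle E bl wh (butlast vsA @ butlast vsB) (esA @ esB)"
proof -
  have lA: "length vsA = Suc (length esA)" and lB: "length vsB = Suc (length esB)"
    using A Bw by (simp_all add: walk_def)
  have dA: "distinct vsA" "distinct esA" "set esA \<subseteq> E" and dB: "distinct vsB" "distinct esB" "set esB \<subseteq> E"
    using A Bw by (simp_all add: walk_def)
  let ?X = "butlast vsA @ butlast vsB"
  have nA: "vsA \<noteq> []" "butlast vsA \<noteq> []" using lA ne by (auto simp: butlast_conv_take)
  have nB: "vsB \<noteq> []" "butlast vsB \<noteq> []" using lB ne by (auto simp: butlast_conv_take)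
  have "hd (butlast vsA) = hd vsA" using nA by (metis append_butlast_last_id hd_append2)
  then have hdX: "hd ?X = hd vsA" using nA by (simp add: hd_append)
  have bB: "butlast vsB @ [hd vsA] = vsB" using e2 nB by (metis append_butlast_last_id)
  have bA: "butlast vsA @ [hd vsB] = vsA" using e1 nA by (metis append_butlast_last_id)
  have Y1: "?X @ [hd ?X] = butlast vsA @ vsB" using hdX bB by simp
  have Y2: "?X @ [hd ?X] = vsA @ tl vsB" using Y1 bA nB
    by (metis append.assoc append_Cons append_Nil list.collapse)
  have lbA: "length (butlast vsA) = length esA" using lA by simp
  have distX: "distinct ?X"
  proof -
    have "set (butlast vsA) \<inter> set (butlast vsB) = {}"
    proof (rule ccontr)
      assume "set (butlast vsA) \<inter> set (butlast vsB) \<noteq> {}"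
      then obtain x where x: "x \<in> set (butlast vsA)" "x \<in> set (butlast vsB)" by blast
      then have "x \<in> set vsA" "x \<in> set vsB" by (auto dest: in_set_butlastD)
      then have "x = hd vsA \<or> x = hd vsB" using vint by blast
      moreover have "hd vsB \<notin> set (butlast vsA)" using dA(1) bA
        by (metis distinct_append not_distinct_conv_prefix distinct.simps(2) set_append in_set_conv_decomp)
      moreover have "hd vsA \<notin> set (butlast vsB)" using dB(1) bB
        by (metis distinct_append not_distinct_conv_prefix distinct.simps(2) set_append in_set_conv_decomp)
      ultimately show False using x by blast
    qed
    then show ?thesis using dA dB by (simp add: distinct_butlast)
  qed
  show ?thesis unfolding simple_cycle_alt
  proof (intro conjI allI impI)
    show "length ?X = length (esA @ esB)" using lA lB by simp
    show "2 \<le> length (esA @ esB)" using ne by (cases esA; cases esB) auto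
    show "distinct ?X" by (rule distX)
    show "distinct (esA @ esB)" using dA dB eint by simp
    show "set (esA @ esB) \<subseteq> E" using dA dB by simp
    fix i assume i: "i < length (esA @ esB)"
    show "{bl ((esA @ esB) ! i), wh ((esA @ esB) ! i)} = {(?X @ [hd ?X]) ! i, (?X @ [hd ?X]) ! Suc i}"
    proof (cases "i < length esA")
      case True
      have "{bl (esA ! i), wh (esA ! i)} = {vsA!i, vsA!Suc i}" using A True by (simp add: walk_def)
      then show ?thesis unfolding Y2 using True lA by (simp add: nth_append)
    next
      case False
      define j where "j = i - length esA"
      have j: "j < length esB" "i = length esA + j" using i False by (auto simp: j_def)
      have "{bl (esB ! j), wh (esB ! j)} = {vsB!j, vsB!Suc j}" using Bw j by (simp add: walk_def)
      then show ?thesis unfolding Y1 using j lbA lB by (simp add: nth_append)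
    qed
  qed
qed

definition oe :: "('e \<Rightarrow> real \<Rightarrow> complex) \<Rightarrow> ('e \<Rightarrow> 'v) \<Rightarrow> 'e \<Rightarrow> 'v \<Rightarrow> real \<Rightarrow> complex" where
  "oe g bl e v = (if v = bl e then g e else reversepath (g e))"

fun wp :: "('e \<Rightarrow> real \<Rightarrow> complex) \<Rightarrow> ('e \<Rightarrow> 'v) \<Rightarrow> 'v list \<Rightarrow> 'e list \<Rightarrow> real \<Rightarrow> complex" where
  "wp g bl (v#vs) (e#es) = (if es = [] then oe g bl e v else oe g bl e v +++ wp g bl vs es)"
| "wp g bl _ _ = linepath 0 0"

locale pg =
  fixes B W :: "'v set" and E :: "'e set" and bl wh :: "'e \<Rightarrow> 'v"
    and pos :: "'v \<Rightarrow> complex" and g :: "'e \<Rightarrow> real \<Rightarrow> complex"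
  assumes pg: "plane_bipartite_graph B W E bl wh pos g"
begin

abbreviation "V \<equiv> B \<union> W"
abbreviation "G \<equiv> graph_set V E pos g"

lemma pgD: "finite B \<and> finite W \<and> finite E \<and> B \<inter> W = {} \<and>
     (\<forall>e\<in>E. bl e \<in> B \<and> wh e \<in> W) \<and>
     (\<forall>e\<in>E. \<forall>e'\<in>E. bl e = bl e' \<and> wh e = wh e' \<longrightarrow> e = e') \<and>
     inj_on pos (B \<union> W) \<and>
     (\<forall>e\<in>E. arc (g e) \<and> pathstart (g e) = pos (bl e) \<and> pathfinish (g e) = pos (wh e)) \<and>
     (\<forall>e\<in>E. \<forall>v\<in>B \<union> W. pos v \<in> path_image (g e) \<longrightarrow> v = bl e \<or> v = wh e) \<and>
     (\<forall>e\<in>E. \<forall>e'\<in>E. e \<noteq> e' \<longrightarrow>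
        path_image (g e) \<inter> path_image (g e') \<subseteq> pos ` ({bl e, wh e} \<inter> {bl e', wh e'}))"
  using pg unfolding plane_bipartite_graph_def .

lemma finV: "finite V" using pgD by simp
lemma finE: "finite E" using pgD by simp
lemma BW: "B \<inter> W = {}" using pgD by simp
lemma blB: "e \<in> E \<Longrightarrow> bl e \<in> B" using pgD by simp
lemma whW: "e \<in> E \<Longrightarrow> wh e \<in> W" using pgD by simp
lemma injpos: "inj_on pos V" using pgD by simp
lemma arcg: "e \<in> E \<Longrightarrow> arc (g e)" using pgD by simp
lemma startg: "e \<in> E \<Longrightarrow> pathstart (g e) = pos (bl e)" using pgD by simp
lemma finishg: "e \<in> E \<Longrightarrow> pathfinish (g e) = pos (wh e)" using pgD by simp
lemma vert_on: "e \<in> E \<Longrightarrow> v \<in> V \<Longrightarrow> pos v \<in> path_image (g e) \<Longrightarrow> v = bl e \<or> v = wh e"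
  using pgD by simp
lemma edge_meet: "e \<in> E \<Longrightarrow> e' \<in> E \<Longrightarrow> e \<noteq> e' \<Longrightarrow>
        path_image (g e) \<inter> path_image (g e') \<subseteq> pos ` ({bl e, wh e} \<inter> {bl e', wh e'})"
  using pgD by simp
lemma simple_edges: "e \<in> E \<Longrightarrow> e' \<in> E \<Longrightarrow> bl e = bl e' \<Longrightarrow> wh e = wh e' \<Longrightarrow> e = e'"
  using pgD by simp

lemma endsV: "e \<in> E \<Longrightarrow> bl e \<in> V" "e \<in> E \<Longrightarrow> wh e \<in> V"
  by (simp_all add: blB whW)

lemma bl_ne_wh: "e \<in> E \<Longrightarrow> bl e \<noteq> wh e"
  proof
  assume "e \<in> E" "bl e = wh e"
  then have "wh e \<in> B" "wh e \<in> W" using blB[of e] whW[of e] by simp_all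
  then show False using BW by blast
qed

lemma closedG: "closed G"
proof -
  have "finite (pos ` V)" using finV by (rule finite_imageI)
  then have c1: "closed (pos ` V)" by (rule finite_imp_closed)
  have "\<And>e. e \<in> E \<Longrightarrow> closed (path_image (g e))"
    by (rule closed_path_image, rule arc_imp_path, erule arcg)
  then have c2: "closed (\<Union>e\<in>E. path_image (g e))"
    using finE by (intro closed_UN) auto
  show ?thesis unfolding graph_set_def using c1 c2 by (rule closed_Un)
qed

lemma edge_sub_G: "e \<in> E \<Longrightarrow> path_image (g e) \<subseteq> G"
  unfolding graph_set_def by blast

lemma same_edge:
  assumes "e \<in> E" "e' \<in> E" "x \<in> path_image (g e)" "x \<in> path_image (g e')" "x \<notin> pos ` V"
  shows "e = e'"
proof (rule ccontr)
  assume "e \<noteq> e'"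
  then have "x \<in> pos ` ({bl e, wh e} \<inter> {bl e', wh e'})" using edge_meet[OF assms(1,2)] assms(3,4) by blast
  moreover have "{bl e, wh e} \<inter> {bl e', wh e'} \<subseteq> V" using endsV[OF assms(1)] by auto
  ultimately show False using assms(5) by blast
qed

lemma pos_end: "e \<in> E \<Longrightarrow> pos (bl e) \<in> path_image (g e)" "e \<in> E \<Longrightarrow> pos (wh e) \<in> path_image (g e)"
proof -
  assume "e \<in> E"
  show "pos (bl e) \<in> path_image (g e)" using pathstart_in_path_image[of "g e"] startg[OF \<open>e\<in>E\<close>] by simp
  show "pos (wh e) \<in> path_image (g e)" using pathfinish_in_path_image[of "g e"] finishg[OF \<open>e\<in>E\<close>] by simp
qed

lemma mid_not_vertex:
  assumes "e \<in> E" shows "g e (1/2) \<in> path_image (g e)" "g e (1/2) \<notin> pos ` V"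
proof -
  show "g e (1/2) \<in> path_image (g e)" by (auto simp: path_image_def)
  show "g e (1/2) \<notin> pos ` V"
  proof
    assume "g e (1/2) \<in> pos ` V"
    then obtain v where v: "v \<in> V" "g e (1/2) = pos v" by auto
    then have "v = bl e \<or> v = wh e" using vert_on[OF assms v(1)] \<open>g e (1/2) \<in> path_image (g e)\<close> by auto
    then have "g e (1/2) = g e 0 \<or> g e (1/2) = g e 1"
      using v startg[OF assms] finishg[OF assms] by (auto simp: pathstart_def pathfinish_def)
    moreover have "inj_on (g e) {0..1}" using arcg[OF assms] by (simp add: arc_def)
    ultimately show False by (auto dest: inj_onD)
  qed
qed


lemma oe_facts:
  assumes e: "e \<in> E" and uv: "{bl e, wh e} = {v, u}"
  shows "arc (oe g bl e v)" "pathstart (oe g bl e v) = pos v" "pathfinish (oe g bl e v) = pos u"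
    "path_image (oe g bl e v) = path_image (g e)"
proof -
  have ne: "bl e \<noteq> wh e" by (rule bl_ne_wh[OF e])
  show "arc (oe g bl e v)" using arcg[OF e] by (simp add: oe_def arc_reversepath)
  show "path_image (oe g bl e v) = path_image (g e)" by (simp add: oe_def)
  have "(v = bl e \<and> u = wh e) \<or> (v = wh e \<and> u = bl e)" using uv ne by (auto simp: doubleton_eq_iff)
  then show "pathstart (oe g bl e v) = pos v" "pathfinish (oe g bl e v) = pos u"
    using startg[OF e] finishg[OF e] ne by (auto simp: oe_def)
qed

lemma walk_endpoints_in:
  assumes "walk E bl wh vs es" "e \<in> set es" shows "bl e \<in> set vs" "wh e \<in> set vs"
proof -
  have "es \<noteq> []" using assms(2) by auto
  then have "set vs = (\<Union>e\<in>set es. {bl e, wh e})" using walk_verts[OF assms(1)] by blast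
  then show "bl e \<in> set vs" "wh e \<in> set vs" using assms(2) by blast+
qed

lemma wp_arc:
  assumes "walk E bl wh vs es" "es \<noteq> []"
  shows "arc (wp g bl vs es) \<and> pathstart (wp g bl vs es) = pos (hd vs) \<and>
         pathfinish (wp g bl vs es) = pos (last vs) \<and>
         path_image (wp g bl vs es) = (\<Union>e\<in>set es. path_image (g e))"
  using assms
proof (induction es arbitrary: vs)
  case Nil then show ?case by simp
next
  case (Cons e es)
  then obtain v us where vs: "vs = v # us" by (cases vs) (auto simp: walk_def)
  with Cons.prems have w: "walk E bl wh us es" "v \<notin> set us" "e \<notin> set es" "e \<in> E" "{bl e, wh e} = {v, hd us}"
    by (simp_all add: walk_Cons)
  note o = oe_facts[OF w(4) w(5)]
  show ?case
  proof (cases "es = []")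
    case True
    then obtain u where "us = [u]" using w(1) by (auto simp: walk_Nil)
    then show ?thesis using vs o True by simp
  next
    case False
    have us: "us \<noteq> []" using w(1) by (auto simp: walk_def)
    note IH = Cons.IH[OF w(1) False]
    have int: "path_image (oe g bl e v) \<inter> path_image (wp g bl us es) \<subseteq> {pathstart (wp g bl us es)}"
    proof
      fix x assume x: "x \<in> path_image (oe g bl e v) \<inter> path_image (wp g bl us es)"
      then obtain e' where e': "e' \<in> set es" "x \<in> path_image (g e')" "x \<in> path_image (g e)" using IH o by auto
      have e'E: "e' \<in> E" using e' w(1) walk_distinct(3) by blast
      have "e \<noteq> e'" using e' w(3) by auto
      then have "x \<in> pos ` ({bl e, wh e} \<inter> {bl e', wh e'})" using edge_meet[OF w(4) e'E] e' by blast
      moreover have "{bl e', wh e'} \<subseteq> set us" using walk_endpoints_in[OF w(1) e'(1)] by auto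
      ultimately have "x = pos (hd us)" using w(2,5) by auto
      then show "x \<in> {pathstart (wp g bl us es)}" using IH by simp
    qed
    have "arc (oe g bl e v +++ wp g bl us es)" using o IH int by (intro arc_join) auto
    moreover have "last vs = last us" using vs us by simp
    ultimately show ?thesis using vs o IH False us by (simp add: path_image_join)
  qed
qed

lemma walk_image_inter:
  assumes A: "walk E bl wh vsA esA" and Bw: "walk E bl wh vsB esB"
    and ne: "esA \<noteq> []" "esB \<noteq> []" and d: "set esA \<inter> set esB = {}"
  shows "(\<Union>e\<in>set esA. path_image (g e)) \<inter> (\<Union>e\<in>set esB. path_image (g e)) = pos ` (set vsA \<inter> set vsB)"
proof
  show "(\<Union>e\<in>set esA. path_image (g e)) \<inter> (\<Union>e\<in>set esB. path_image (g e)) \<subseteq> pos ` (set vsA \<inter> set vsB)"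
  proof
    fix x assume "x \<in> (\<Union>e\<in>set esA. path_image (g e)) \<inter> (\<Union>e\<in>set esB. path_image (g e))"
    then obtain e e' where ee: "e \<in> set esA" "e' \<in> set esB" "x \<in> path_image (g e)" "x \<in> path_image (g e')" by blast
    have eE: "e \<in> E" "e' \<in> E" using ee A Bw walk_distinct(3) by blast+
    have "e \<noteq> e'" using ee d by blast
    then have "x \<in> pos ` ({bl e, wh e} \<inter> {bl e', wh e'})" using edge_meet[OF eE] ee by blast
    moreover have "{bl e, wh e} \<subseteq> set vsA" using walk_endpoints_in[OF A ee(1)] by auto
    moreover have "{bl e', wh e'} \<subseteq> set vsB" using walk_endpoints_in[OF Bw ee(2)] by auto
    ultimately show "x \<in> pos ` (set vsA \<inter> set vsB)" by blast
  qed
  show "pos ` (set vsA \<inter> set vsB) \<subseteq> (\<Union>e\<in>set esA. path_image (g e)) \<inter> (\<Union>e\<in>set esB. path_image (g e))"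
  proof
    fix x assume "x \<in> pos ` (set vsA \<inter> set vsB)"
    then obtain v where v: "v \<in> set vsA" "v \<in> set vsB" "x = pos v" by blast
    obtain e where e: "e \<in> set esA" "v = bl e \<or> v = wh e" using walk_verts[OF A ne(1)] v(1) by auto
    obtain e' where e': "e' \<in> set esB" "v = bl e' \<or> v = wh e'" using walk_verts[OF Bw ne(2)] v(2) by auto
    have eE: "e \<in> E" "e' \<in> E" using e e' A Bw walk_distinct(3) by blast+
    have "x \<in> path_image (g e)" using e(2) pos_end[OF eE(1)] v(3) by auto
    moreover have "x \<in> path_image (g e')" using e'(2) pos_end[OF eE(2)] v(3) by auto
    ultimately show "x \<in> (\<Union>e\<in>set esA. path_image (g e)) \<inter> (\<Union>e\<in>set esB. path_image (g e))"
      using e(1) e'(1) by blast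
  qed
qed

lemma two_walks_loop:
  assumes A: "walk E bl wh vsA esA" and Bw: "walk E bl wh vsB esB"
    and ne: "esA \<noteq> []" "esB \<noteq> []" and d: "set esA \<inter> set esB = {}"
    and e1: "last vsA = hd vsB" and e2: "last vsB = hd vsA"
    and vint: "set vsA \<inter> set vsB \<subseteq> {hd vsA, hd vsB}"
  shows "simple_path (wp g bl vsA esA +++ wp g bl vsB esB)"
    "pathfinish (wp g bl vsA esA +++ wp g bl vsB esB) = pathstart (wp g bl vsA esA +++ wp g bl vsB esB)"
    "path_image (wp g bl vsA esA +++ wp g bl vsB esB) = (\<Union>e\<in>set esA. path_image (g e)) \<union> (\<Union>e\<in>set esB. path_image (g e))"
proof -
  note a = wp_arc[OF A ne(1)] and b = wp_arc[OF Bw ne(2)]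
  have "path_image (wp g bl vsA esA) \<inter> path_image (wp g bl vsB esB) \<subseteq> {pathstart (wp g bl vsA esA), pathstart (wp g bl vsB esB)}"
    using a b walk_image_inter[OF A Bw ne d] vint by auto
  then show "simple_path (wp g bl vsA esA +++ wp g bl vsB esB)"
    using a b e1 e2 by (intro simple_path_join_loop) auto
  show "pathfinish (wp g bl vsA esA +++ wp g bl vsB esB) = pathstart (wp g bl vsA esA +++ wp g bl vsB esB)"
    using a b e2 by simp
  show "path_image (wp g bl vsA esA +++ wp g bl vsB esB) = (\<Union>e\<in>set esA. path_image (g e)) \<union> (\<Union>e\<in>set esB. path_image (g e))"
    using a b e1 by (simp add: path_image_join)
qed

end

context pg begin

lemma cycle_split_props:
  assumes c: "simple_cycle E bl wh vs es" and b: "0 < b" "b < length es"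
  defines "vsA \<equiv> take (Suc b) vs" and "esA \<equiv> take b es"
      and "vsB \<equiv> drop b vs @ [hd vs]" and "esB \<equiv> drop b es"
  shows "walk E bl wh vsA esA" "walk E bl wh vsB esB" "esA \<noteq> []" "esB \<noteq> []"
    "set esA \<inter> set esB = {}" "last vsA = vs!b" "hd vsB = vs!b" "last vsB = hd vs" "hd vsA = hd vs"
    "set vsA \<inter> set vsB = {hd vs, vs!b}" "set esA \<union> set esB = set es" "set vsA \<union> set vsB = set vs"
    "hd vs \<noteq> vs!b"
proof -
  have l: "length vs = length es" and d: "distinct vs" "distinct es"
    using c by (simp_all add: simple_cycle_alt)
  have vne: "vs \<noteq> []" using b l by auto
  show "walk E bl wh vsA esA" "walk E bl wh vsB esB" unfolding vsA_def esA_def vsB_def esB_def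
    using cycle_split[OF c b] by auto
  show "esA \<noteq> []" "esB \<noteq> []" using b by (auto simp: esA_def esB_def)
  show "set esA \<inter> set esB = {}" using d(2) by (simp add: esA_def esB_def set_take_disj_set_drop_if_distinct)
  have "length (take (Suc b) vs) = Suc b" using b l by simp
  moreover have "take (Suc b) vs \<noteq> []" using b l by auto
  ultimately have "last (take (Suc b) vs) = take (Suc b) vs ! b" by (simp add: last_conv_nth)
  then show "last vsA = vs!b" unfolding vsA_def by simp
  show "hd vsB = vs!b" using b l by (simp add: vsB_def hd_drop_conv_nth)
  show "last vsB = hd vs" by (simp add: vsB_def)
  show "hd vsA = hd vs" using vne by (simp add: vsA_def)
  have "0 < length vs" "b < length vs" using b l by linarith+
  then have "vs!0 = vs!b \<longleftrightarrow> 0 = b" by (rule nth_eq_iff_index_eq[OF d(1)])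
  then have "vs!0 \<noteq> vs!b" using b by linarith
  then show hb: "hd vs \<noteq> vs!b" using vne by (simp add: hd_conv_nth)
  have hin: "hd vs \<in> set (take (Suc b) vs)" using vne by (cases vs) auto
  have bl: "b < length vs" using b l by linarith
  have tS: "take (Suc b) vs = take b vs @ [vs!b]" using bl by (rule take_Suc_conv_app_nth)
  have dS: "drop b vs = vs!b # drop (Suc b) vs" using bl by (rule Cons_nth_drop_Suc[symmetric])
  have bin: "vs!b \<in> set (take (Suc b) vs)" unfolding tS by simp
  have bin2: "vs!b \<in> set (drop b vs)" unfolding dS by simp
  have dtd: "distinct (take b vs @ drop b vs)" using d(1) by simp
  then have tdd: "set (take b vs) \<inter> set (drop b vs) = {}" by (simp only: distinct_append)
  have tdi: "set (take (Suc b) vs) \<inter> set (drop b vs) \<subseteq> {vs!b}"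
    unfolding tS using tdd by auto
  show "set vsA \<inter> set vsB = {hd vs, vs!b}" unfolding vsA_def vsB_def
    using tdi hin bin bin2 by auto
  show "set esA \<union> set esB = set es" unfolding esA_def esB_def
    using set_append[of "take b es" "drop b es"] by simp
  have "set vs = set (take b vs) \<union> set (drop b vs)" using set_append[of "take b vs" "drop b vs"] by simp
  then have "set (take (Suc b) vs) \<union> set (drop b vs) = set vs" using bin2 unfolding tS by auto
  then show "set vsA \<union> set vsB = set vs" unfolding vsA_def vsB_def using hin by auto
qed

lemma cycle_loop:
  assumes c: "simple_cycle E bl wh vs es"
  shows "\<exists>p. simple_path p \<and> pathfinish p = pathstart p \<and> path_image p = cycle_image g es"
proof -
  have b: "0 < (1::nat)" "1 < length es" using c by (auto simp: simple_cycle_def)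
  note s = cycle_split_props[OF c b]
  let ?p = "wp g bl (take 2 vs) (take 1 es) +++ wp g bl (drop 1 vs @ [hd vs]) (drop 1 es)"
  have "simple_path ?p" "pathfinish ?p = pathstart ?p"
    "path_image ?p = (\<Union>e\<in>set (take 1 es). path_image (g e)) \<union> (\<Union>e\<in>set (drop 1 es). path_image (g e))"
    using two_walks_loop[OF s(1,2,3,4,5)] s by (simp_all add: numeral_2_eq_2)
  moreover have "(\<Union>e\<in>set (take 1 es). path_image (g e)) \<union> (\<Union>e\<in>set (drop 1 es). path_image (g e)) = cycle_image g es"
    using s(11) by (auto simp: cycle_image_def)
  ultimately show ?thesis by metis
qed

lemma cycle_image_sub: "simple_cycle E bl wh vs es \<Longrightarrow> cycle_image g es \<subseteq> G"
  unfolding cycle_image_def simple_cycle_def graph_set_def by blast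

lemma jordan_cycle:
  assumes c: "simple_cycle E bl wh vs es"
  defines "J \<equiv> cycle_image g es"
  shows "inside J \<noteq> {}" "open (inside J)" "connected (inside J)" "bounded (inside J)"
    "frontier (inside J) = J" "inside J \<inter> J = {}" "closure (inside J) = inside J \<union> J" "closed J"
proof -
  obtain p where p: "simple_path p" "pathfinish p = pathstart p" "path_image p = J"
    using cycle_loop[OF c] J_def by blast
  note j = Jordan_inside_outside[OF p(1,2), unfolded p(3)]
  show "inside J \<noteq> {}" "open (inside J)" "connected (inside J)" "bounded (inside J)"
    "frontier (inside J) = J" using j by auto
  show "inside J \<inter> J = {}" by simp
  show "closure (inside J) = inside J \<union> J"
    using j by (metis closure_Un_frontier)
  have "closed (path_image p)" by (rule closed_path_image[OF simple_path_imp_path[OF p(1)]])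
  then show "closed J" using p(3) by simp
qed

lemma conn_inside:
  assumes "connected S" "S \<inter> J = {}" "S \<inter> inside J \<noteq> {}"
  shows "S \<subseteq> inside J"
proof -
  have "outside J \<inter> S = {}"
    using inside_outside_intersect_connected[OF assms(1)] assms(2,3) by blast
  moreover have "S \<subseteq> inside J \<union> outside J" using assms(2) by auto
  ultimately show ?thesis by blast
qed

lemma cilium_inside:
  assumes vc: "valid_cilia V E pos g cil" and v: "v \<in> V" and JG: "J \<subseteq> G" and pv: "pos v \<notin> J"
  shows "cil v \<in> inside J \<longleftrightarrow> pos v \<in> inside J"
proof -
  let ?S = "closed_segment (pos v) (cil v)"
  have "?S \<inter> G = {pos v}" using vc v by (simp add: valid_cilia_def)
  then have "?S \<inter> J \<subseteq> {pos v}" using JG by blast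
  then have SJ: "?S \<inter> J = {}" using pv by blast
  show ?thesis
  proof
    assume "cil v \<in> inside J"
    then have "?S \<subseteq> inside J" using conn_inside[OF connected_segment SJ] by blast
    then show "pos v \<in> inside J" by auto
  next
    assume "pos v \<in> inside J"
    then have "?S \<subseteq> inside J" using conn_inside[OF connected_segment SJ] by blast
    then show "cil v \<in> inside J" by auto
  qed
qed

lemma cil_notin_G:
  assumes vc: "valid_cilia V E pos g cil" and v: "v \<in> V"
  shows "cil v \<notin> G"
proof -
  have "closed_segment (pos v) (cil v) \<inter> G = {pos v}" "cil v \<noteq> pos v" using vc v by (simp_all add: valid_cilia_def)
  then show ?thesis by auto
qed

lemma cycle_even:
  assumes c: "simple_cycle E bl wh vs es"
  shows "even (length es)"
proof -
  let ?m = "length es"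
  have l: "length vs = ?m" and m2: "2 \<le> ?m" and sE: "set es \<subseteq> E"
    and cond: "\<forall>i<?m. {bl (es!i), wh (es!i)} = {vs!i, vs!((i+1) mod ?m)}"
    using c by (simp_all add: simple_cycle_def)
  have step: "vs!i \<in> B \<longleftrightarrow> vs!((i+1) mod ?m) \<notin> B" if i: "i < ?m" for i
  proof -
    have eE: "es!i \<in> E" using sE i by auto
    have "bl (es!i) \<in> B" "wh (es!i) \<in> W" "wh (es!i) \<notin> B" using blB[OF eE] whW[OF eE] BW by auto
    moreover have "{bl (es!i), wh (es!i)} = {vs!i, vs!((i+1) mod ?m)}" using cond i by simp
    ultimately show ?thesis by (auto simp: doubleton_eq_iff)
  qed
  have ind: "i < ?m \<Longrightarrow> (vs!i \<in> B \<longleftrightarrow> (vs!0 \<in> B \<longleftrightarrow> even i))" for i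
  proof (induction i)
    case 0 then show ?case by simp
  next
    case (Suc i)
    then have "i < ?m" by simp
    then have "vs!i \<in> B \<longleftrightarrow> vs!(Suc i) \<notin> B" using step[of i] Suc.prems by simp
    then show ?case using Suc by auto
  qed
  have "?m - 1 + 1 = ?m" using m2 by simp
  then have "?m - 1 < ?m" "(?m - 1 + 1) mod ?m = 0" using m2 by simp_all
  then have "vs!(?m - 1) \<in> B \<longleftrightarrow> vs!0 \<notin> B" using step[of "?m - 1"] by simp
  moreover have "vs!(?m - 1) \<in> B \<longleftrightarrow> (vs!0 \<in> B \<longleftrightarrow> even (?m - 1))" using ind[of "?m - 1"] m2 by simp
  ultimately have "odd (?m - 1)" by (cases "vs!0 \<in> B") auto
  then show ?thesis using m2 by (simp add: even_diff_nat)
qed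

end

lemma join_props:
  assumes A: "walk E bl wh vsA esA" and Bw: "walk E bl wh vsB esB"
    and ne: "esA \<noteq> []" "esB \<noteq> []"
    and e1: "last vsA = hd vsB" and e2: "last vsB = hd vsA"
  shows "set (butlast vsA @ butlast vsB) = set vsA \<union> set vsB"
    "hd (butlast vsA @ butlast vsB) = hd vsA"
proof -
  have lA: "length vsA = Suc (length esA)" and lB: "length vsB = Suc (length esB)"
    using A Bw by (simp_all add: walk_def)
  have nA: "vsA \<noteq> []" "butlast vsA \<noteq> []" using lA ne by (auto simp: butlast_conv_take)
  have nB: "vsB \<noteq> []" "butlast vsB \<noteq> []" using lB ne by (auto simp: butlast_conv_take)
  have bB: "butlast vsB @ [hd vsA] = vsB" using e2 append_butlast_last_id[OF nB(1)] by simp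
  have bA: "butlast vsA @ [hd vsB] = vsA" using e1 append_butlast_last_id[OF nA(1)] by simp
  have hA: "hd vsA = hd (butlast vsA)" using hd_append2[OF nA(2), of "[hd vsB]"] bA by simp
  have hB: "hd vsB = hd (butlast vsB)" using hd_append2[OF nB(2), of "[hd vsA]"] bB by simp
  have sA: "set vsA = set (butlast vsA) \<union> {hd vsB}" using arg_cong[OF bA, of set] by auto
  have sB: "set vsB = set (butlast vsB) \<union> {hd vsA}" using arg_cong[OF bB, of set] by auto
  have "hd vsA \<in> set (butlast vsA)" using hA nA(2) by simp
  moreover have "hd vsB \<in> set (butlast vsB)" using hB nB(2) by simp
  ultimately show "set (butlast vsA @ butlast vsB) = set vsA \<union> set vsB" using sA sB by auto
  show "hd (butlast vsA @ butlast vsB) = hd vsA" using nA hA by (simp add: hd_append)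
qed

context pg begin

lemma cycle_verts:
  assumes c: "simple_cycle E bl wh vs es"
  shows "set vs = (\<Union>e\<in>set es. {bl e, wh e})"
proof -
  have b: "0 < (1::nat)" "1 < length es" using c by (auto simp: simple_cycle_def)
  note s = cycle_split_props[OF c b]
  have "set vs = set (take 2 vs) \<union> set (drop 1 vs @ [hd vs])" using s(12) by (simp add: numeral_2_eq_2)
  also have "\<dots> = (\<Union>e\<in>set (take 1 es). {bl e, wh e}) \<union> (\<Union>e\<in>set (drop 1 es). {bl e, wh e})"
    using walk_verts[OF s(1) s(3)] walk_verts[OF s(2) s(4)] by (simp add: numeral_2_eq_2)
  also have "\<dots> = (\<Union>e\<in>set es. {bl e, wh e})" using s(11) by auto
  finally show ?thesis .
qed

lemma edges_V: "set es \<subseteq> E \<Longrightarrow> (\<Union>e\<in>set es. {bl e, wh e}) \<subseteq> V"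
proof
  fix v assume "set es \<subseteq> E" "v \<in> (\<Union>e\<in>set es. {bl e, wh e})"
  then obtain e where "e \<in> E" "v = bl e \<or> v = wh e" by auto
  then show "v \<in> V" using endsV[of e] by auto
qed

lemma cycle_V: "simple_cycle E bl wh vs es \<Longrightarrow> set vs \<subseteq> V"
  using cycle_verts[of vs es] edges_V[of es] unfolding simple_cycle_def by simp

lemma walk_V: "walk E bl wh vs es \<Longrightarrow> es \<noteq> [] \<Longrightarrow> set vs \<subseteq> V"
  using walk_verts[of E bl wh vs es] edges_V[of es] walk_distinct(3)[of E bl wh vs es] by simp

lemma pos_in_edges:
  assumes "set es \<subseteq> E" "v \<in> V" "pos v \<in> (\<Union>e\<in>set es. path_image (g e))"
  shows "\<exists>e\<in>set es. v = bl e \<or> v = wh e"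
proof -
  obtain e where e: "e \<in> set es" "pos v \<in> path_image (g e)" using assms(3) by auto
  then have "e \<in> E" using assms(1) by auto
  then show ?thesis using vert_on[OF _ assms(2) e(2)] e(1) by blast
qed

lemma pos_in_cycle:
  assumes c: "simple_cycle E bl wh vs es" and v: "v \<in> V"
  shows "pos v \<in> cycle_image g es \<longleftrightarrow> v \<in> set vs"
proof
  assume "pos v \<in> cycle_image g es"
  then obtain e where "e \<in> set es" "v = bl e \<or> v = wh e"
    using pos_in_edges[OF _ v, of es] c by (auto simp: cycle_image_def simple_cycle_def)
  then show "v \<in> set vs" using cycle_verts[OF c] by auto
next
  assume "v \<in> set vs"
  then obtain e where e: "e \<in> set es" "v = bl e \<or> v = wh e" using cycle_verts[OF c] by auto
  then have "e \<in> E" using c by (auto simp: simple_cycle_def)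
  then show "pos v \<in> cycle_image g es" using e pos_end unfolding cycle_image_def by blast
qed

lemma pos_in_walk:
  assumes w: "walk E bl wh vs es" and ne: "es \<noteq> []" and v: "v \<in> V"
  shows "pos v \<in> (\<Union>e\<in>set es. path_image (g e)) \<longleftrightarrow> v \<in> set vs"
proof
  assume "pos v \<in> (\<Union>e\<in>set es. path_image (g e))"
  then obtain e where "e \<in> set es" "v = bl e \<or> v = wh e"
    using pos_in_edges[OF walk_distinct(3)[OF w] v] by blast
  then show "v \<in> set vs" using walk_verts[OF w ne] by auto
next
  assume "v \<in> set vs"
  then obtain e where e: "e \<in> set es" "v = bl e \<or> v = wh e" using walk_verts[OF w ne] by auto
  then have "e \<in> E" using walk_distinct(3)[OF w] by auto
  then show "pos v \<in> (\<Union>e\<in>set es. path_image (g e))" using e pos_end by blast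
qed

lemma cycle_rotate:
  assumes c: "simple_cycle E bl wh vs es" and a: "a < length es"
  shows "\<exists>vs' es'. simple_cycle E bl wh vs' es' \<and> set vs' = set vs \<and> set es' = set es \<and>
           length es' = length es \<and> hd vs' = vs!a"
proof (cases "a = 0")
  case True
  have "vs \<noteq> []" using c a by (auto simp: simple_cycle_def)
  then show ?thesis using c True by (intro exI[of _ vs] exI[of _ es]) (simp add: hd_conv_nth)
next
  case False
  then have a0: "0 < a" by simp
  note s = cycle_split_props[OF c a0 a]
  let ?vsA = "take (Suc a) vs" and ?esA = "take a es" and ?vsB = "drop a vs @ [hd vs]" and ?esB = "drop a es"
  have j: "simple_cycle E bl wh (butlast ?vsB @ butlast ?vsA) (?esB @ ?esA)"
    using s by (intro cycle_join) (auto simp: Int_commute)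
  note jp = join_props[OF s(2) s(1) s(4) s(3)] 
  have "set (butlast ?vsB @ butlast ?vsA) = set vs" "hd (butlast ?vsB @ butlast ?vsA) = vs!a"
    using jp s by auto
  moreover have "set (?esB @ ?esA) = set es" "length (?esB @ ?esA) = length es" using s(11) a by auto
  ultimately show ?thesis using j by blast
qed

lemma cycle_image_append: "cycle_image g (xs @ ys) = (\<Union>e\<in>set xs. path_image (g e)) \<union> (\<Union>e\<in>set ys. path_image (g e))"
  by (auto simp: cycle_image_def)

end

context pg begin

lemma cycle_rotate_exact:
  assumes c: "simple_cycle E bl wh vs es" and a: "0 < a" "a < length es"
  shows "simple_cycle E bl wh (drop a vs @ take a vs) (drop a es @ take a es)"
proof -
  note s = cycle_split_props[OF c a]
  have j: "simple_cycle E bl wh (butlast (drop a vs @ [hd vs]) @ butlast (take (Suc a) vs)) (drop a es @ take a es)"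
    using s by (intro cycle_join) (auto simp: Int_commute)
  have l: "length vs = length es" using c by (simp add: simple_cycle_def)
  have "butlast (take (Suc a) vs) = take a vs" using a l by (simp add: butlast_take)
  then show ?thesis using j by simp
qed

lemma near_edge:
  assumes e0: "e0 \<in> E"
  shows "\<exists>r>0. ball (g e0 (1/2)) r \<inter> G \<subseteq> path_image (g e0) \<and> ball (g e0 (1/2)) r \<inter> pos ` V = {}"
proof -
  let ?x = "g e0 (1/2)"
  let ?K = "pos ` V \<union> (\<Union>e\<in>E - {e0}. path_image (g e))"
  have "finite (pos ` V)" using finV by (rule finite_imageI)
  then have c1: "closed (pos ` V)" by (rule finite_imp_closed)
  have "\<And>e. e \<in> E - {e0} \<Longrightarrow> closed (path_image (g e))"
    by (rule closed_path_image, rule arc_imp_path, rule arcg) simp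
  then have c2: "closed (\<Union>e\<in>E - {e0}. path_image (g e))"
    using finE by (intro closed_UN) auto
  have cK: "closed ?K" using c1 c2 by (rule closed_Un)
  have xK: "?x \<notin> ?K"
  proof
    assume "?x \<in> ?K"
    moreover have "?x \<notin> pos ` V" by (rule mid_not_vertex(2)[OF e0])
    ultimately obtain e where e: "e \<in> E" "e \<noteq> e0" "?x \<in> path_image (g e)" by blast
    have "e0 = e" using same_edge[OF e0 e(1) mid_not_vertex(1)[OF e0] e(3) mid_not_vertex(2)[OF e0]] .
    then show False using e(2) by simp
  qed
  have "open (- ?K)" using open_Compl[OF cK] .
  then obtain r where r: "r > 0" "ball ?x r \<subseteq> - ?K" using xK by (meson ComplI open_contains_ball_eq)
  have "ball ?x r \<inter> G \<subseteq> path_image (g e0)"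
  proof
    fix z assume z: "z \<in> ball ?x r \<inter> G"
    then have "z \<notin> ?K" using r by blast
    with z show "z \<in> path_image (g e0)" unfolding graph_set_def by blast
  qed
  moreover have "ball ?x r \<inter> pos ` V = {}" using r by blast
  ultimately show ?thesis using r(1) by blast
qed

end

locale pgf = pg +
  assumes bfs: "bounded_faces_simple B W E bl wh pos g"
begin

lemma face_near_cycle:
  assumes c: "simple_cycle E bl wh vs es" and IG: "inside (cycle_image g es) \<inter> G \<noteq> {}"
  shows "\<exists>vs' es'. simple_cycle E bl wh vs' es' \<and> es!0 \<in> set es' \<and> \<not> set es' \<subseteq> set es \<and>
           cycle_image g es' \<subseteq> inside (cycle_image g es) \<union> cycle_image g es"
proof -
  let ?J = "cycle_image g es" let ?I = "inside ?J"
  note jc = jordan_cycle[OF c]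
  have JG: "?J \<subseteq> G" by (rule cycle_image_sub[OF c])
  have m: "0 < length es" using c by (auto simp: simple_cycle_def)
  define e0 where "e0 = es!0"
  have e0es: "e0 \<in> set es" using m by (simp add: e0_def)
  have e0: "e0 \<in> E" using e0es c by (auto simp: simple_cycle_def)
  define x where "x = g e0 (1/2)"
  obtain r where r: "r > 0" "ball x r \<inter> G \<subseteq> path_image (g e0)" "ball x r \<inter> pos ` V = {}"
    using near_edge[OF e0] unfolding x_def by blast
  have xJ: "x \<in> ?J" using mid_not_vertex(1)[OF e0] e0es unfolding x_def cycle_image_def by blast
  have xG: "x \<in> G" using xJ JG by blast
  then have "x \<in> closure ?I" using jc(7) xJ by blast
  then obtain y where y: "y \<in> ?I" "dist y x < r" using r(1) by (auto simp: closure_approachable)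
  have yb: "y \<in> ball x r" using y(2) by (simp add: dist_commute)
  have yG: "y \<notin> G"
  proof
    assume "y \<in> G"
    then have "y \<in> path_image (g e0)" using r(2) yb by blast
    then have "y \<in> ?J" using e0es unfolding cycle_image_def by blast
    then show False using y(1) jc(6) by blast
  qed
  define f where "f = connected_component_set (- G) y"
  have fc: "f \<in> components (- G)" using yG unfolding f_def by (auto simp: components_iff)
  have fo: "open f" unfolding f_def using closedG by (simp add: open_connected_component open_Compl)
  have yf: "y \<in> f" using yG unfolding f_def by simp
  have fconn: "connected f" unfolding f_def by simp
  have fG: "f \<inter> G = {}" unfolding f_def using connected_component_subset by blast
  have fI: "f \<subseteq> ?I"
    using conn_inside[OF fconn] fG JG y(1) yf by blast
  have fb: "bounded f" using fI jc(4) bounded_subset by blast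
  obtain vs' es' where c': "simple_cycle E bl wh vs' es'" and ff: "frontier f = cycle_image g es'"
    using bfs fc fb unfolding bounded_faces_simple_def by blast
  have frG: "frontier f \<subseteq> G" using frontier_of_components_closed_complement[OF closedG fc] .
  have "ball x r \<inter> frontier f \<noteq> {}"
  proof (rule connected_Int_frontier)
    show "connected (ball x r)" by simp
    show "ball x r \<inter> f \<noteq> {}" using yb yf by blast
    have "x \<in> ball x r" using r(1) by simp
    moreover have "x \<notin> f" using xG fG by blast
    ultimately show "ball x r - f \<noteq> {}" by blast
  qed
  then obtain z where z: "z \<in> ball x r" "z \<in> frontier f" by blast
  then have z0: "z \<in> path_image (g e0)" using r(2) frG by blast
  have zV: "z \<notin> pos ` V" using z(1) r(3) by blast
  obtain e' where e': "e' \<in> set es'" "z \<in> path_image (g e')" using z(2) ff unfolding cycle_image_def by blast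
  have "e' \<in> E" using e' c' by (auto simp: simple_cycle_def)
  then have "e0 = e'" using same_edge[OF e0 _ z0 e'(2) zV] by simp
  then have e0es': "e0 \<in> set es'" using e' by simp
  have notsub: "\<not> set es' \<subseteq> set es"
  proof
    assume "set es' \<subseteq> set es"
    then have fJ: "frontier f \<subseteq> ?J" using ff unfolding cycle_image_def by blast
    have "closedin (top_of_set ?I) f"
    proof -
      have IF: "?I \<inter> frontier f = {}" using fJ jc(6) by blast
      have "?I \<inter> closure f = f"
        unfolding closure_Un_frontier[of f] using IF fI by blast
      then show ?thesis by (metis closedin_closed closed_closure inf_commute)
    qed
    moreover have "openin (top_of_set ?I) f" using fo fI by (simp add: openin_open_eq jc(2))
    ultimately have "f = {} \<or> f = ?I" using jc(3) connected_clopen by blast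
    then have "f = ?I" using yf by blast
    then show False using IG fG by simp
  qed
  have "cycle_image g es' \<subseteq> ?I \<union> ?J"
  proof -
    have "frontier f \<subseteq> closure f" by (simp add: frontier_def)
    also have "\<dots> \<subseteq> closure ?I" using fI by (rule closure_mono)
    finally show ?thesis using ff jc(7) by simp
  qed
  then show ?thesis using c' e0es' notsub unfolding e0_def by blast
qed

end

context pg begin

lemma rotate_facts:
  assumes c: "simple_cycle E bl wh vs es" and a: "0 < a" "a < length es"
  shows "simple_cycle E bl wh (drop a vs @ take a vs) (drop a es @ take a es)"
    "set (drop a vs @ take a vs) = set vs" "set (drop a es @ take a es) = set es"
    "(drop a es @ take a es) ! 0 = es ! a" "last (drop a es @ take a es) = es ! (a - 1)"
    "cycle_image g (drop a es @ take a es) = cycle_image g es"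
proof -
  show "simple_cycle E bl wh (drop a vs @ take a vs) (drop a es @ take a es)" by (rule cycle_rotate_exact[OF c a])
  show "set (drop a vs @ take a vs) = set vs" using set_append[of "take a vs" "drop a vs"] by auto
  show se: "set (drop a es @ take a es) = set es" using set_append[of "take a es" "drop a es"] by auto
  show "(drop a es @ take a es) ! 0 = es ! a" using a by (simp add: nth_append)
  have "take a es \<noteq> []" using a by auto
  then have "last (drop a es @ take a es) = last (take a es)" by simp
  also have "\<dots> = take a es ! (a - 1)"
  proof -
    have "length (take a es) = a" using a by simp
    then show ?thesis using last_conv_nth[of "take a es"] \<open>take a es \<noteq> []\<close> by simp
  qed
  also have "\<dots> = es ! (a - 1)" using a by simp
  finally show "last (drop a es @ take a es) = es ! (a - 1)" .
  show "cycle_image g (drop a es @ take a es) = cycle_image g es" using se by (simp add: cycle_image_def)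
qed

lemma cycle_edge_ends:
  assumes c: "simple_cycle E bl wh vs es" and i: "i < length es"
  shows "vs!i \<in> {bl (es!i), wh (es!i)}" "vs!((i+1) mod length es) \<in> {bl (es!i), wh (es!i)}"
  using c i unfolding simple_cycle_def by auto

end

context pgf begin

lemma chord_cycle:
  assumes c: "simple_cycle E bl wh vs es" and IG: "inside (cycle_image g es) \<inter> G \<noteq> {}"
  shows "\<exists>vs' es'. simple_cycle E bl wh vs' es' \<and> es'!0 \<notin> set es \<and> last es' \<in> set es \<and>
           cycle_image g es' \<subseteq> inside (cycle_image g es) \<union> cycle_image g es"
proof -
  obtain vs1 es1 where c1: "simple_cycle E bl wh vs1 es1" and e0: "es!0 \<in> set es1"
    and ns: "\<not> set es1 \<subseteq> set es" and sub: "cycle_image g es1 \<subseteq> inside (cycle_image g es) \<union> cycle_image g es"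
    using face_near_cycle[OF c IG] by blast
  have m0: "0 < length es" using c by (auto simp: simple_cycle_def)
  have e0es: "es!0 \<in> set es" using m0 by simp
  obtain j0 where j0: "j0 < length es1" "es1!j0 = es!0" using e0 by (auto simp: in_set_conv_nth)
  obtain vs2 es2 where c2: "simple_cycle E bl wh vs2 es2" and s2: "set es2 = set es1"
    and h2: "es2!0 \<in> set es" and ci2: "cycle_image g es2 = cycle_image g es1" and l2: "length es2 = length es1"
  proof (cases "j0 = 0")
    case True then show ?thesis using that[OF c1] j0 e0es by simp
  next
    case False
    then have a: "0 < j0" by simp
    note r = rotate_facts[OF c1 a j0(1)]
    show ?thesis using that[OF r(1)] r j0 e0es by simp
  qed
  have ex: "\<exists>i. i < length es2 \<and> es2!i \<notin> set es"
  proof -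
    obtain x where x: "x \<in> set es1" "x \<notin> set es" using ns by blast
    then have "x \<in> set es2" using s2 by simp
    then obtain i where "i < length es2" "es2!i = x" by (auto simp: in_set_conv_nth)
    then show ?thesis using x(2) by blast
  qed
  define i where "i = (LEAST i. i < length es2 \<and> es2!i \<notin> set es)"
  have i: "i < length es2" "es2!i \<notin> set es" using LeastI_ex[OF ex] unfolding i_def by blast+
  have i0: "0 < i" using i h2 by (cases i) auto
  have ip: "es2!(i-1) \<in> set es"
  proof (rule ccontr)
    assume "es2!(i-1) \<notin> set es"
    then have P: "i - 1 < length es2 \<and> es2!(i-1) \<notin> set es" using i(1) by simp
    have "i \<le> i - 1" using Least_le[of "\<lambda>i. i < length es2 \<and> es2!i \<notin> set es", OF P] unfolding i_def[symmetric] .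
    then show False using i0 by simp
  qed
  note r = rotate_facts[OF c2 i0 i(1)]
  show ?thesis
    using r i ip sub ci2 by (intro exI[of _ "drop i vs2 @ take i vs2"] exI[of _ "drop i es2 @ take i es2"]) simp
qed

lemma find_chord:
  assumes c: "simple_cycle E bl wh vs es" and IG: "inside (cycle_image g es) \<inter> G \<noteq> {}"
  shows "\<exists>vsP esP. walk E bl wh vsP esP \<and> esP \<noteq> [] \<and> set esP \<inter> set es = {} \<and>
           set vsP \<inter> set vs = {hd vsP, last vsP} \<and>
           (\<Union>e\<in>set esP. path_image (g e)) - {pos (hd vsP), pos (last vsP)} \<subseteq> inside (cycle_image g es)"
proof -
  let ?J = "cycle_image g es"
  obtain vs' es' where c': "simple_cycle E bl wh vs' es'" and f0: "es'!0 \<notin> set es"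
    and fl: "last es' \<in> set es" and sub: "cycle_image g es' \<subseteq> inside ?J \<union> ?J"
    using chord_cycle[OF c IG] by blast
  define m where "m = length es'"
  have m2: "2 \<le> m" and lv: "length vs' = m" using c' by (auto simp: simple_cycle_def m_def)
  have esne: "es' \<noteq> []" using m2 m_def by auto
  have lastm: "last es' = es'!(m-1)" using esne by (simp add: last_conv_nth m_def)
  have mm: "(m - 1 + 1) mod m = 0" using m2 by simp
  have vsv: "set vs = (\<Union>e\<in>set es. {bl e, wh e})" by (rule cycle_verts[OF c])
  have ends_in: "e \<in> set es \<Longrightarrow> bl e \<in> set vs \<and> wh e \<in> set vs" for e using vsv by auto
  have "vs'!(m-1) \<in> {bl (es'!(m-1)), wh (es'!(m-1))}" "vs'!0 \<in> {bl (es'!(m-1)), wh (es'!(m-1))}"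
    using cycle_edge_ends[OF c', of "m-1"] m2 mm unfolding m_def by auto
  then have v0: "vs'!0 \<in> set vs" and vm: "vs'!(m-1) \<in> set vs"
    using ends_in[of "es'!(m-1)"] fl lastm by auto
  have ex: "\<exists>j. 0 < j \<and> vs'!j \<in> set vs" using vm m2 by (intro exI[of _ "m-1"]) simp
  define j where "j = (LEAST j. 0 < j \<and> vs'!j \<in> set vs)"
  have j: "0 < j" "vs'!j \<in> set vs" using LeastI_ex[OF ex] unfolding j_def by blast+
  have jm: "j \<le> m - 1" using vm m2 unfolding j_def by (intro Least_le) simp
  have jmin: "0 < t \<Longrightarrow> t < j \<Longrightarrow> vs'!t \<notin> set vs" for t
    using not_less_Least[of t "\<lambda>j. 0 < j \<and> vs'!j \<in> set vs"] unfolding j_def[symmetric] by blast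
  have jlt: "j < length es'" using jm m2 m_def by simp
  define vsP where "vsP = take (Suc j) vs'"
  define esP where "esP = take j es'"
  have wP: "walk E bl wh vsP esP" unfolding vsP_def esP_def by (rule cycle_split(1)[OF c' j(1) jlt])
  have neP: "esP \<noteq> []" using j(1) esne unfolding esP_def by simp
  have "vs' \<noteq> []" using lv m2 by auto
  then have hdP: "hd vsP = vs'!0" unfolding vsP_def by (simp add: hd_conv_nth)
  have lastP: "last vsP = vs'!j"
  proof -
    have "length vsP = Suc j" using jm m2 lv unfolding vsP_def by simp
    then have "last vsP = vsP!j" using last_conv_nth[of vsP] by fastforce
    then show ?thesis unfolding vsP_def by simp
  qed
  have edges_not: "set esP \<inter> set es = {}"
  proof (rule ccontr)
    assume "set esP \<inter> set es \<noteq> {}"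
    then obtain x where x: "x \<in> set esP" "x \<in> set es" by blast
    then obtain t where t0: "t < length esP" "esP!t = x" by (auto simp: in_set_conv_nth)
    have "length esP = j" using jlt unfolding esP_def by simp
    then have t: "t < j" "es'!t \<in> set es" using t0 x unfolding esP_def by auto
    have tm: "t < length es'" using t jlt by simp
    show False
    proof (cases "t = 0")
      case True then show False using t f0 by simp
    next
      case False
      have "vs'!t \<in> {bl (es'!t), wh (es'!t)}" using cycle_edge_ends(1)[OF c' tm] .
      then have "vs'!t \<in> set vs" using ends_in[OF t(2)] by auto
      then show False using jmin[of t] False t(1) by simp
    qed
  qed
  have vint: "set vsP \<inter> set vs = {hd vsP, last vsP}"
  proof
    show "set vsP \<inter> set vs \<subseteq> {hd vsP, last vsP}"
    proof
      fix v assume v: "v \<in> set vsP \<inter> set vs"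
      then obtain t where t: "t < length vsP" "vsP!t = v" by (auto simp: in_set_conv_nth)
      have tj: "t \<le> j" using t(1) unfolding vsP_def by simp
      have vt: "v = vs'!t" using t tj unfolding vsP_def by simp
      show "v \<in> {hd vsP, last vsP}"
      proof (cases "t = 0")
        case True then show ?thesis using vt hdP by simp
      next
        case False
        then have "\<not> t < j" using jmin[of t] v vt by auto
        then have "t = j" using tj by simp
        then show ?thesis using vt lastP by simp
      qed
    qed
    have "vsP \<noteq> []" using wP by (auto simp: walk_def)
    then have "hd vsP \<in> set vsP" "last vsP \<in> set vsP" by simp_all
    then show "{hd vsP, last vsP} \<subseteq> set vsP \<inter> set vs"
      using hdP lastP v0 j(2) by auto
  qed
  have img: "(\<Union>e\<in>set esP. path_image (g e)) - {pos (hd vsP), pos (last vsP)} \<subseteq> inside ?J"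
  proof
    fix x assume x: "x \<in> (\<Union>e\<in>set esP. path_image (g e)) - {pos (hd vsP), pos (last vsP)}"
    then obtain e where e: "e \<in> set esP" "x \<in> path_image (g e)" by blast
    have eE: "e \<in> E" using e(1) walk_distinct(3)[OF wP] by blast
    have "e \<in> set es'" using e(1) unfolding esP_def by (meson in_set_takeD)
    then have "x \<in> cycle_image g es'" using e(2) unfolding cycle_image_def by blast
    then have "x \<in> inside ?J \<union> ?J" using sub by blast
    moreover have "x \<notin> ?J"
    proof
      assume "x \<in> ?J"
      then obtain e'' where e'': "e'' \<in> set es" "x \<in> path_image (g e'')" unfolding cycle_image_def by blast
      have e''E: "e'' \<in> E" using e''(1) c by (auto simp: simple_cycle_def)
      have "e \<noteq> e''" using e(1) e''(1) edges_not by blast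
      then have "x \<in> pos ` ({bl e, wh e} \<inter> {bl e'', wh e''})" using edge_meet[OF eE e''E] e(2) e''(2) by blast
      then obtain v where v: "v \<in> {bl e, wh e}" "v \<in> {bl e'', wh e''}" "x = pos v" by blast
      have "v \<in> set vsP" using v(1) walk_endpoints_in[OF wP e(1)] by auto
      moreover have "v \<in> set vs" using v(2) ends_in[OF e''(1)] by auto
      ultimately have "v \<in> {hd vsP, last vsP}" using vint by blast
      then show False using x v(3) by auto
    qed
    ultimately show "x \<in> inside ?J" by blast
  qed
  show ?thesis using wP neP edges_not vint img by blast
qed

end

locale kpg = pgf B W E bl wh pos g
  for B W :: "'v set" and E :: "'e set" and bl wh :: "'e \<Rightarrow> 'v"
    and pos :: "'v \<Rightarrow> complex" and g :: "'e \<Rightarrow> real \<Rightarrow> complex" +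
  fixes n :: "'v \<Rightarrow> nat" and cil :: "'v \<Rightarrow> complex" and \<epsilon> :: "'e \<Rightarrow> int"
  assumes vc: "valid_cilia (B \<union> W) E pos g cil"
    and kast: "kasteleyn (B \<union> W) E pos g n cil \<epsilon>"
begin

definition Phi :: "'v list \<Rightarrow> 'e list \<Rightarrow> bool" where
  "Phi vs es \<longleftrightarrow> (\<Prod>e\<in>set es. \<epsilon> e) =
           (-1) ^ (length es div 2 + 1
                   + card {v\<in>set vs. even (n v) \<and> cil v \<in> inside (cycle_image g es)}
                   + (\<Sum>v\<in>{v\<in>V. pos v \<in> inside (cycle_image g es)}. n v))"

definition mu :: "'e list \<Rightarrow> nat" where
  "mu es = card {e\<in>E. path_image (g e) \<inter> inside (cycle_image g es) \<noteq> {}}"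

lemma Phi_cong:
  assumes "set vs' = set vs" "set es' = set es" "length es' = length es"
  shows "Phi vs' es' \<longleftrightarrow> Phi vs es"
proof -
  have "cycle_image g es' = cycle_image g es" using assms(2) by (simp add: cycle_image_def)
  then show ?thesis unfolding Phi_def using assms by simp
qed

lemma eps_pm: "e \<in> E \<Longrightarrow> \<epsilon> e = 1 \<or> \<epsilon> e = -1"
  using kast by (simp add: kasteleyn_def)

lemma base_case:
  assumes c: "simple_cycle E bl wh vs es" and IG: "inside (cycle_image g es) \<inter> G = {}"
  shows "Phi vs es"
proof -
  let ?J = "cycle_image g es" let ?I = "inside ?J"
  note jc = jordan_cycle[OF c]
  have JG: "?J \<subseteq> G" by (rule cycle_image_sub[OF c])
  have comp: "?I \<in> components (- G)"
    unfolding in_components_maximal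
  proof (intro conjI allI impI)
    show "?I \<noteq> {}" "connected ?I" using jc by auto
    show "?I \<subseteq> - G" using IG by blast
    fix D assume D: "D \<noteq> {} \<and> ?I \<subseteq> D \<and> D \<subseteq> - G \<and> connected D"
    have "D \<inter> ?J = {}" using D JG by blast
    moreover have "D \<inter> ?I \<noteq> {}" using D jc(1) by blast
    ultimately have "D \<subseteq> ?I" using conn_inside D by blast
    then show "D = ?I" using D by blast
  qed
  have k: "(\<Prod>e\<in>face_edges E g ?I. \<epsilon> e) =
          (-1) ^ (card (face_edges E g ?I) div 2 + 1 +
                  card {v\<in>V. pos v \<in> frontier ?I \<and> even (n v) \<and> cil v \<in> ?I})"
    using kast comp jc(4) unfolding kasteleyn_def by blast
  have fe: "face_edges E g ?I = set es"
  proof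
    show "face_edges E g ?I \<subseteq> set es"
    proof
      fix e assume "e \<in> face_edges E g ?I"
      then have e: "e \<in> E" "path_image (g e) \<subseteq> ?J" using jc(5) by (auto simp: face_edges_def)
      then have "g e (1/2) \<in> ?J" using mid_not_vertex(1)[OF e(1)] by blast
      then obtain e' where e': "e' \<in> set es" "g e (1/2) \<in> path_image (g e')" unfolding cycle_image_def by blast
      have "e' \<in> E" using e' c by (auto simp: simple_cycle_def)
      then have "e = e'" using same_edge[OF e(1) _ mid_not_vertex(1)[OF e(1)] e'(2) mid_not_vertex(2)[OF e(1)]] by simp
      then show "e \<in> set es" using e' by simp
    qed
    show "set es \<subseteq> face_edges E g ?I"
      using c jc(5) by (auto simp: face_edges_def simple_cycle_def cycle_image_def)
  qed
  have ce: "card (set es) = length es" using c by (simp add: simple_cycle_def distinct_card)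
  have vv: "{v\<in>V. pos v \<in> frontier ?I \<and> even (n v) \<and> cil v \<in> ?I} = {v\<in>set vs. even (n v) \<and> cil v \<in> ?I}"
    using pos_in_cycle[OF c] cycle_V[OF c] jc(5) by blast
  have em: "{v\<in>V. pos v \<in> ?I} = {}" using IG unfolding graph_set_def by blast
  have s0: "(\<Sum>v\<in>{v\<in>V. pos v \<in> ?I}. n v) = 0" by (simp only: em sum.empty)
  show ?thesis unfolding Phi_def s0 using k fe ce vv jc(5) by simp
qed

end

context kpg begin

lemma step_geom:
  assumes c: "simple_cycle E bl wh vs es" and wP: "walk E bl wh vsP esP" and neP: "esP \<noteq> []"
    and dE: "set esP \<inter> set es = {}" and vI: "set vsP \<inter> set vs = {hd vsP, last vsP}"
    and img: "(\<Union>e\<in>set esP. path_image (g e)) - {pos (hd vsP), pos (last vsP)} \<subseteq> inside (cycle_image g es)"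
    and hdv: "hd vsP = hd vs"
  obtains b where "0 < b" "b < length es" "last vsP = vs!b"
    "simple_cycle E bl wh (butlast (take (Suc b) vs) @ butlast (rev vsP)) (take b es @ rev esP)"
    "simple_cycle E bl wh (butlast vsP @ butlast (drop b vs @ [hd vs])) (esP @ drop b es)"
    "inside ((\<Union>e\<in>set (take b es). path_image (g e)) \<union> (\<Union>e\<in>set esP. path_image (g e))) \<inter>
     inside ((\<Union>e\<in>set (drop b es). path_image (g e)) \<union> (\<Union>e\<in>set esP. path_image (g e))) = {}"
    "inside ((\<Union>e\<in>set (take b es). path_image (g e)) \<union> (\<Union>e\<in>set esP. path_image (g e))) \<union>
     inside ((\<Union>e\<in>set (drop b es). path_image (g e)) \<union> (\<Union>e\<in>set esP. path_image (g e))) \<union>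
     ((\<Union>e\<in>set esP. path_image (g e)) - {pos (hd vsP), pos (last vsP)}) = inside (cycle_image g es)"
proof -
  define u where "u = hd vsP"
  define w where "w = last vsP"
  have lP: "length vsP = Suc (length esP)" using wP by (simp add: walk_def)
  have vPne: "vsP \<noteq> []" using lP by auto
  have uw: "u \<noteq> w"
  proof -
    have "length vsP \<ge> 2" using lP neP by (cases esP) auto
    then have "0 < length vsP" "length vsP - 1 < length vsP" by linarith+
    then have "vsP!0 = vsP!(length vsP - 1) \<longleftrightarrow> 0 = length vsP - 1"
      by (rule nth_eq_iff_index_eq[OF walk_distinct(1)[OF wP]])
    then have "vsP!0 \<noteq> vsP!(length vsP - 1)" using \<open>length vsP \<ge> 2\<close> by linarith
    then show ?thesis unfolding u_def w_def using vPne by (simp add: hd_conv_nth last_conv_nth)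
  qed
  have uP: "u \<in> set vsP" and wPin: "w \<in> set vsP" using vPne unfolding u_def w_def by simp_all
  have wv: "w \<in> set vs" using vI wPin unfolding w_def by blast
  have lv: "length vs = length es" using c by (simp add: simple_cycle_def)
  obtain b where b: "b < length vs" "vs!b = w" using wv by (auto simp: in_set_conv_nth)
  have vsne: "vs \<noteq> []" using b by auto
  have b0: "0 < b"
  proof (rule ccontr)
    assume "\<not> 0 < b"
    then have "w = hd vs" using b vsne by (simp add: hd_conv_nth)
    then show False using uw hdv u_def by simp
  qed
  have bl': "b < length es" using b lv by simp
  note s = cycle_split_props[OF c b0 bl']
  define vsA where "vsA = take (Suc b) vs" define esA where "esA = take b es"
  define vsB where "vsB = drop b vs @ [hd vs]" define esB where "esB = drop b es"
  note s = s[folded vsA_def esA_def vsB_def esB_def]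
  have AinV: "set vsA \<subseteq> set vs" "set vsB \<subseteq> set vs" using s(12) by auto
  have eAinE: "set esA \<subseteq> set es" "set esB \<subseteq> set es" using s(11) by auto
  have hA: "hd vsA = u" and lA: "last vsA = w" and hB: "hd vsB = w" and lB: "last vsB = u"
    using s(6,7,8,9) b hdv unfolding u_def w_def by auto
  have AP: "set vsA \<inter> set vsP = {u, w}"
  proof
    show "set vsA \<inter> set vsP \<subseteq> {u, w}" using AinV vI unfolding u_def w_def by blast
    have "vsA \<noteq> []" using s(1) by (auto simp: walk_def)
    then have "u \<in> set vsA" "w \<in> set vsA" using hA lA by (metis hd_in_set, metis last_in_set)
    then show "{u, w} \<subseteq> set vsA \<inter> set vsP" using uP wPin by blast
  qed
  have BP: "set vsB \<inter> set vsP = {u, w}"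
  proof
    show "set vsB \<inter> set vsP \<subseteq> {u, w}" using AinV vI unfolding u_def w_def by blast
    have "vsB \<noteq> []" unfolding vsB_def by simp
    then have "u \<in> set vsB" "w \<in> set vsB" using hB lB by (metis last_in_set, metis hd_in_set)
    then show "{u, w} \<subseteq> set vsB \<inter> set vsP" using uP wPin by blast
  qed
  have AB: "set vsA \<inter> set vsB = {u, w}" using s(10) hdv b unfolding u_def w_def by simp
  have wrP: "walk E bl wh (rev vsP) (rev esP)" by (rule walk_rev[OF wP])
  have c1: "simple_cycle E bl wh (butlast vsA @ butlast (rev vsP)) (esA @ rev esP)"
  proof (rule cycle_join[OF s(1) wrP s(3)])
    show "rev esP \<noteq> []" using neP by simp
    show "last vsA = hd (rev vsP)" using lA vPne unfolding w_def by (simp add: hd_rev)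
    show "last (rev vsP) = hd vsA" using hA vPne unfolding u_def by (simp add: last_rev)
    show "set vsA \<inter> set (rev vsP) \<subseteq> {hd vsA, hd (rev vsP)}" using AP hA vPne unfolding w_def by (simp add: hd_rev)
    show "set esA \<inter> set (rev esP) = {}" using dE eAinE by auto
  qed
  have c2: "simple_cycle E bl wh (butlast vsP @ butlast vsB) (esP @ esB)"
  proof (rule cycle_join[OF wP s(2) neP s(4)])
    show "last vsP = hd vsB" using hB unfolding w_def by simp
    show "last vsB = hd vsP" using lB unfolding u_def by simp
    show "set vsP \<inter> set vsB \<subseteq> {hd vsP, hd vsB}" using BP hB unfolding u_def by auto
    show "set esP \<inter> set esB = {}" using dE eAinE by auto
  qed
  define imA where "imA = (\<Union>e\<in>set esA. path_image (g e))"
  define imB where "imB = (\<Union>e\<in>set esB. path_image (g e))"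
  define imP where "imP = (\<Union>e\<in>set esP. path_image (g e))"
  note aA = wp_arc[OF s(1) s(3), folded imA_def]
  note aB = wp_arc[OF s(2) s(4), folded imB_def]
  note aP = wp_arc[OF wP neP, folded imP_def]
  have PV: "set vsP \<subseteq> V" by (rule walk_V[OF wP neP])
  have uV: "u \<in> V" and wV: "w \<in> V" using uP wPin PV by (blast, blast)
  have puw: "pos u \<noteq> pos w" using inj_onD[OF injpos _ uV wV] uw by blast
  have JAB: "cycle_image g es = imA \<union> imB" unfolding imA_def imB_def cycle_image_def
    unfolding s(11)[symmetric] by (rule UN_Un)
  have iAB: "imA \<inter> imB = {pos u, pos w}"
    unfolding imA_def imB_def using walk_image_inter[OF s(1) s(2) s(3) s(4) s(5)] AB by simp
  have iAP: "imA \<inter> imP = {pos u, pos w}"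
  proof -
    have "set esA \<inter> set esP = {}" using dE eAinE by auto
    then show ?thesis unfolding imA_def imP_def using walk_image_inter[OF s(1) wP s(3) neP] AP by simp
  qed
  have iBP: "imB \<inter> imP = {pos u, pos w}"
  proof -
    have "set esB \<inter> set esP = {}" using dE eAinE by auto
    then show ?thesis unfolding imB_def imP_def using walk_image_inter[OF s(2) wP s(4) neP] BP by simp
  qed
  have neI: "imP \<inter> inside (imA \<union> imB) \<noteq> {}"
  proof -
    obtain e where e: "e \<in> set esP" using neP by (cases esP) auto
    have eE: "e \<in> E" using e walk_distinct(3)[OF wP] by blast
    have "g e (1/2) \<in> imP" using mid_not_vertex(1)[OF eE] e unfolding imP_def by blast
    moreover have "g e (1/2) \<noteq> pos u" "g e (1/2) \<noteq> pos w" using mid_not_vertex(2)[OF eE] uV wV by auto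
    ultimately have "g e (1/2) \<in> imP - {pos u, pos w}" by blast
    then have "g e (1/2) \<in> inside (cycle_image g es)" by (rule subsetD[OF img[folded imP_def u_def w_def]])
    then have "g e (1/2) \<in> inside (imA \<union> imB)" unfolding JAB .
    then show ?thesis using \<open>g e (1/2) \<in> imP\<close> by blast
  qed
  have pa: "path_image (wp g bl vsA esA) = imA" "path_image (reversepath (wp g bl vsB esB)) = imB"
    "path_image (wp g bl vsP esP) = imP" using aA aB aP by simp_all
  let ?c1 = "path_image (wp g bl vsA esA)" and ?c2 = "path_image (reversepath (wp g bl vsB esB))"
    and ?c = "path_image (wp g bl vsP esP)"
  have th0: "inside (?c1 \<union> ?c) \<inter> inside (?c2 \<union> ?c) = {} \<and>
     inside (?c1 \<union> ?c) \<union> inside (?c2 \<union> ?c) \<union> (?c - {pos u, pos w}) = inside (?c1 \<union> ?c2)"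
  proof (rule split_inside_simple_closed_curve[of "wp g bl vsA esA" "pos u" "pos w" "reversepath (wp g bl vsB esB)" "wp g bl vsP esP"])
    show "simple_path (wp g bl vsA esA)" using aA arc_imp_simple_path by blast
    show "simple_path (reversepath (wp g bl vsB esB))" using aB arc_imp_simple_path simple_path_reversepath by blast
    show "simple_path (wp g bl vsP esP)" using aP arc_imp_simple_path by blast
    show "pathstart (wp g bl vsA esA) = pos u" "pathfinish (wp g bl vsA esA) = pos w" using aA hA lA by auto
    show "pathstart (reversepath (wp g bl vsB esB)) = pos u" "pathfinish (reversepath (wp g bl vsB esB)) = pos w"
      using aB hB lB by auto
    show "pathstart (wp g bl vsP esP) = pos u" "pathfinish (wp g bl vsP esP) = pos w"
      using aP unfolding u_def w_def by auto
    show "pos u \<noteq> pos w" by (rule puw)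
    show "path_image (wp g bl vsA esA) \<inter> path_image (reversepath (wp g bl vsB esB)) = {pos u, pos w}"
      using aA aB iAB by simp
    show "path_image (wp g bl vsA esA) \<inter> path_image (wp g bl vsP esP) = {pos u, pos w}" using aA aP iAP by simp
    show "path_image (reversepath (wp g bl vsB esB)) \<inter> path_image (wp g bl vsP esP) = {pos u, pos w}"
      using aB aP iBP by simp
    show "path_image (wp g bl vsP esP) \<inter> inside (path_image (wp g bl vsA esA) \<union> path_image (reversepath (wp g bl vsB esB))) \<noteq> {}"
      using aA aB aP neI by simp
  qed blast
  then have th: "inside (imA \<union> imP) \<inter> inside (imB \<union> imP) = {} \<and>
     inside (imA \<union> imP) \<union> inside (imB \<union> imP) \<union> (imP - {pos u, pos w}) = inside (imA \<union> imB)"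
    unfolding pa .
  then have th1: "inside (imA \<union> imP) \<inter> inside (imB \<union> imP) = {}"
     and th2: "inside (imA \<union> imP) \<union> inside (imB \<union> imP) \<union> (imP - {pos u, pos w}) = inside (imA \<union> imB)"
    by blast+
  show thesis
  proof (rule that[OF b0 bl'])
    show "last vsP = vs!b" using b unfolding w_def by simp
    show "simple_cycle E bl wh (butlast (take (Suc b) vs) @ butlast (rev vsP)) (take b es @ rev esP)"
      using c1 unfolding vsA_def esA_def .
    show "simple_cycle E bl wh (butlast vsP @ butlast (drop b vs @ [hd vs])) (esP @ drop b es)"
      using c2 unfolding vsB_def esB_def .
    show "inside ((\<Union>e\<in>set (take b es). path_image (g e)) \<union> (\<Union>e\<in>set esP. path_image (g e))) \<inter>
     inside ((\<Union>e\<in>set (drop b es). path_image (g e)) \<union> (\<Union>e\<in>set esP. path_image (g e))) = {}"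
      using th1 unfolding imA_def imB_def imP_def esA_def esB_def .
    show "inside ((\<Union>e\<in>set (take b es). path_image (g e)) \<union> (\<Union>e\<in>set esP. path_image (g e))) \<union>
     inside ((\<Union>e\<in>set (drop b es). path_image (g e)) \<union> (\<Union>e\<in>set esP. path_image (g e))) \<union>
     ((\<Union>e\<in>set esP. path_image (g e)) - {pos (hd vsP), pos (last vsP)}) = inside (cycle_image g es)"
      using th2 JAB unfolding imA_def imB_def imP_def esA_def esB_def u_def w_def by simp
  qed
qed

end

lemma parity_sum:
  fixes n :: "'v \<Rightarrow> nat"
  assumes "finite X"
  shows "even (card {v\<in>X. even (n v)} + (\<Sum>v\<in>X. n v) + card X)"
  using assms
proof (induction X rule: finite_induct)
  case empty then show ?case by simp
next
  case (insert x X)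
  have f: "finite {v\<in>X. even (n v)}" using insert(1) by simp
  have xn: "x \<notin> {v\<in>X. even (n v)}" using insert(2) by simp
  show ?case
  proof (cases "even (n x)")
    case True
    then have "{v\<in>insert x X. even (n v)} = insert x {v\<in>X. even (n v)}" by auto
    then have "card {v\<in>insert x X. even (n v)} = Suc (card {v\<in>X. even (n v)})" using f xn by simp
    then show ?thesis using insert True by simp
  next
    case False
    then have "{v\<in>insert x X. even (n v)} = {v\<in>X. even (n v)}" by auto
    moreover have "(\<Sum>v\<in>insert x X. n v) = n x + (\<Sum>v\<in>X. n v)" "card (insert x X) = Suc (card X)"
      using insert(1,2) by simp_all
    moreover have "odd (n x)" using False by simp
    ultimately show ?thesis using insert.IH by presburger
  qed
qed

lemma neg1_pow_eq: "even (a + b) \<Longrightarrow> (-1::int) ^ a = (-1) ^ b"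
  by (cases "even a") (auto simp: neg_one_even_power neg_one_odd_power)

context kpg begin

lemma prod_sq:
  assumes "set xs \<subseteq> E"
  shows "(\<Prod>e\<in>set xs. \<epsilon> e) * (\<Prod>e\<in>set xs. \<epsilon> e) = 1"
proof -
  have "(\<Prod>e\<in>set xs. \<epsilon> e) * (\<Prod>e\<in>set xs. \<epsilon> e) = (\<Prod>e\<in>set xs. \<epsilon> e * \<epsilon> e)"
    by (rule prod.distrib[symmetric])
  also have "\<dots> = (\<Prod>e\<in>set xs. 1)"
  proof (rule prod.cong)
    fix e assume "e \<in> set xs"
    then have "\<epsilon> e = 1 \<or> \<epsilon> e = -1" using assms eps_pm by blast
    then show "\<epsilon> e * \<epsilon> e = 1" by auto
  qed simp
  finally show ?thesis by simp
qed

lemma step_phi: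
  assumes c: "simple_cycle E bl wh vs es" and wP: "walk E bl wh vsP esP" and neP: "esP \<noteq> []"
    and dE: "set esP \<inter> set es = {}" and vI: "set vsP \<inter> set vs = {hd vsP, last vsP}"
    and img: "(\<Union>e\<in>set esP. path_image (g e)) - {pos (hd vsP), pos (last vsP)} \<subseteq> inside (cycle_image g es)"
    and hdv: "hd vsP = hd vs"
  shows "\<exists>vs1 es1 vs2 es2. simple_cycle E bl wh vs1 es1 \<and> simple_cycle E bl wh vs2 es2 \<and>
           mu es1 < mu es \<and> mu es2 < mu es \<and> (Phi vs1 es1 \<longrightarrow> Phi vs2 es2 \<longrightarrow> Phi vs es)"
proof -
  obtain b where b0: "0 < b" and bl': "b < length es" and lw: "last vsP = vs!b"
    and c1: "simple_cycle E bl wh (butlast (take (Suc b) vs) @ butlast (rev vsP)) (take b es @ rev esP)"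
    and c2: "simple_cycle E bl wh (butlast vsP @ butlast (drop b vs @ [hd vs])) (esP @ drop b es)"
    and th1: "inside ((\<Union>e\<in>set (take b es). path_image (g e)) \<union> (\<Union>e\<in>set esP. path_image (g e))) \<inter>
     inside ((\<Union>e\<in>set (drop b es). path_image (g e)) \<union> (\<Union>e\<in>set esP. path_image (g e))) = {}"
    and th2: "inside ((\<Union>e\<in>set (take b es). path_image (g e)) \<union> (\<Union>e\<in>set esP. path_image (g e))) \<union>
     inside ((\<Union>e\<in>set (drop b es). path_image (g e)) \<union> (\<Union>e\<in>set esP. path_image (g e))) \<union>
     ((\<Union>e\<in>set esP. path_image (g e)) - {pos (hd vsP), pos (last vsP)}) = inside (cycle_image g es)"
    using step_geom[OF assms] by blast
  note s = cycle_split_props[OF c b0 bl']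
  define vsA where "vsA = take (Suc b) vs" define esA where "esA = take b es"
  define vsB where "vsB = drop b vs @ [hd vs]" define esB where "esB = drop b es"
  note s = s[folded vsA_def esA_def vsB_def esB_def]
  define vs1 where "vs1 = butlast vsA @ butlast (rev vsP)" define es1 where "es1 = esA @ rev esP"
  define vs2 where "vs2 = butlast vsP @ butlast vsB" define es2 where "es2 = esP @ esB"
  note c1 = c1[folded vsA_def esA_def, folded vs1_def es1_def]
  note c2 = c2[folded vsB_def esB_def, folded vs2_def es2_def]
  define u where "u = hd vsP" define w where "w = last vsP"
  define imA where "imA = (\<Union>e\<in>set esA. path_image (g e))"
  define imB where "imB = (\<Union>e\<in>set esB. path_image (g e))"
  define imP where "imP = (\<Union>e\<in>set esP. path_image (g e))"
  define I where "I = inside (cycle_image g es)"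
  define I1 where "I1 = inside (cycle_image g es1)"
  define I2 where "I2 = inside (cycle_image g es2)"
  define Po where "Po = imP - {pos u, pos w}"
  have J1: "cycle_image g es1 = imA \<union> imP" unfolding es1_def imA_def imP_def cycle_image_append by simp
  have J2: "cycle_image g es2 = imB \<union> imP" unfolding es2_def imB_def imP_def cycle_image_append by auto
  have JJ: "cycle_image g es = imA \<union> imB" unfolding imA_def imB_def cycle_image_def
    unfolding s(11)[symmetric] by (rule UN_Un)
  have I12: "I1 \<inter> I2 = {}" using th1 unfolding I1_def I2_def J1 J2 imA_def imB_def imP_def esA_def esB_def .
  have Idec: "I = I1 \<union> I2 \<union> Po" using th2 unfolding I_def I1_def I2_def J1 J2 Po_def imA_def imB_def imP_def esA_def esB_def u_def w_def by simp
  note jc = jordan_cycle[OF c] and jc1 = jordan_cycle[OF c1] and jc2 = jordan_cycle[OF c2]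
  have IJ: "I \<inter> cycle_image g es = {}" "I1 \<inter> cycle_image g es1 = {}" "I2 \<inter> cycle_image g es2 = {}"
    unfolding I_def I1_def I2_def by simp_all
  have PV: "set vsP \<subseteq> V" by (rule walk_V[OF wP neP])
  have lP: "length vsP = Suc (length esP)" using wP by (simp add: walk_def)
  have vPne: "vsP \<noteq> []" using lP by auto
  have uP: "u \<in> set vsP" and wPin: "w \<in> set vsP" using vPne unfolding u_def w_def by simp_all
  have uw: "u \<noteq> w"
  proof -
    have "length vsP \<ge> 2" using lP neP by (cases esP) auto
    then have "0 < length vsP" "length vsP - 1 < length vsP" by linarith+
    then have "vsP!0 = vsP!(length vsP - 1) \<longleftrightarrow> 0 = length vsP - 1"
      by (rule nth_eq_iff_index_eq[OF walk_distinct(1)[OF wP]])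
    then have "vsP!0 \<noteq> vsP!(length vsP - 1)" using \<open>length vsP \<ge> 2\<close> by linarith
    then show ?thesis unfolding u_def w_def using vPne by (simp add: hd_conv_nth last_conv_nth)
  qed
  have uV: "u \<in> V" and wV: "w \<in> V" using uP wPin PV by (blast, blast)
  have uvs: "u \<in> set vs" "w \<in> set vs" using vI uP wPin unfolding u_def w_def by blast+
  define IP where "IP = set vsP - {u, w}"
  have IPV: "IP \<subseteq> V" using PV unfolding IP_def by blast
  have IPvs: "IP \<inter> set vs = {}" using vI unfolding IP_def u_def w_def by blast
  have fin: "finite IP" unfolding IP_def by simp
  have sv1: "set vs1 = set vsA \<union> set vsP"
  proof -
    have "set vs1 = set vsA \<union> set (rev vsP)" unfolding vs1_def
    proof (rule join_props(1)[OF s(1) walk_rev[OF wP] s(3)])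
      show "rev esP \<noteq> []" using neP by simp
      show "last vsA = hd (rev vsP)" using s(6) lw vPne by (simp add: hd_rev)
      show "last (rev vsP) = hd vsA" using s(9) hdv vPne by (simp add: last_rev)
    qed
    then show ?thesis by simp
  qed
  have sv2: "set vs2 = set vsP \<union> set vsB" unfolding vs2_def
  proof (rule join_props(1)[OF wP s(2) neP s(4)])
    show "last vsP = hd vsB" using s(7) lw by simp
    show "last vsB = hd vsP" using s(8) hdv by simp
  qed
  have sv: "set vs = set vsA \<union> set vsB" using s(12) by simp
  have HP: "v \<in> V \<Longrightarrow> pos v \<in> imP \<longleftrightarrow> v \<in> set vsP" for v unfolding imP_def by (rule pos_in_walk[OF wP neP])
  have H: "v \<in> V \<Longrightarrow> pos v \<in> cycle_image g es \<longleftrightarrow> v \<in> set vs" for v by (rule pos_in_cycle[OF c])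
  have H1: "v \<in> V \<Longrightarrow> pos v \<in> cycle_image g es1 \<longleftrightarrow> v \<in> set vs1" for v by (rule pos_in_cycle[OF c1])
  have H2: "v \<in> V \<Longrightarrow> pos v \<in> cycle_image g es2 \<longleftrightarrow> v \<in> set vs2" for v by (rule pos_in_cycle[OF c2])
  have imPG: "imP \<subseteq> G" unfolding imP_def using walk_distinct(3)[OF wP] edge_sub_G by blast
  have cilG: "v \<in> V \<Longrightarrow> cil v \<notin> G" for v by (rule cil_notin_G[OF vc])
  have I1I: "I1 \<subseteq> I" and I2I: "I2 \<subseteq> I" using Idec by blast+
  have IPpos: "v \<in> IP \<Longrightarrow> pos v \<in> Po" for v
  proof -
    assume v: "v \<in> IP"
    then have vV: "v \<in> V" "v \<in> set vsP" "v \<noteq> u" "v \<noteq> w" using IPV unfolding IP_def by auto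
    have "pos v \<noteq> pos u" "pos v \<noteq> pos w" using inj_onD[OF injpos _ vV(1) uV] inj_onD[OF injpos _ vV(1) wV] vV by auto
    then show "pos v \<in> Po" using HP[OF vV(1)] vV(2) unfolding Po_def by blast
  qed
  have PoI: "Po \<subseteq> I" using Idec by blast
  have cil_split: "v \<in> V \<Longrightarrow> cil v \<in> I \<Longrightarrow> cil v \<in> I1 \<or> cil v \<in> I2" for v
  proof -
    assume v: "v \<in> V" "cil v \<in> I"
    have "cil v \<notin> Po" using cilG[OF v(1)] imPG unfolding Po_def by blast
    then show ?thesis using v(2) Idec by blast
  qed
  have notin1: "v \<in> set vs \<Longrightarrow> v \<notin> set vs1 \<Longrightarrow> cil v \<notin> I1" for v
  proof -
    assume v: "v \<in> set vs" "v \<notin> set vs1"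
    have vV: "v \<in> V" using v(1) cycle_V[OF c] by blast
    have "pos v \<notin> cycle_image g es1" using H1[OF vV] v(2) by simp
    then have "cil v \<in> I1 \<longleftrightarrow> pos v \<in> I1" unfolding I1_def by (rule cilium_inside[OF vc vV cycle_image_sub[OF c1]])
    moreover have "pos v \<notin> I" using H[OF vV] v(1) IJ(1) by blast
    ultimately show "cil v \<notin> I1" using I1I by blast
  qed
  have notin2: "v \<in> set vs \<Longrightarrow> v \<notin> set vs2 \<Longrightarrow> cil v \<notin> I2" for v
  proof -
    assume v: "v \<in> set vs" "v \<notin> set vs2"
    have vV: "v \<in> V" using v(1) cycle_V[OF c] by blast
    have "pos v \<notin> cycle_image g es2" using H2[OF vV] v(2) by simp
    then have "cil v \<in> I2 \<longleftrightarrow> pos v \<in> I2" unfolding I2_def by (rule cilium_inside[OF vc vV cycle_image_sub[OF c2]])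
    moreover have "pos v \<notin> I" using H[OF vV] v(1) IJ(1) by blast
    ultimately show "cil v \<notin> I2" using I2I by blast
  qed
  have IPcil: "v \<in> IP \<Longrightarrow> cil v \<in> I" for v
  proof -
    assume v: "v \<in> IP"
    have vV: "v \<in> V" using v IPV by blast
    have pI: "pos v \<in> I" using IPpos[OF v] PoI by blast
    then have "pos v \<notin> cycle_image g es" using IJ(1) by blast
    then have "cil v \<in> I \<longleftrightarrow> pos v \<in> I" unfolding I_def by (rule cilium_inside[OF vc vV cycle_image_sub[OF c]])
    then show "cil v \<in> I" using pI by simp
  qed
  define S1 where "S1 = {v\<in>set vs1. even (n v) \<and> cil v \<in> I1}"
  define S2 where "S2 = {v\<in>set vs2. even (n v) \<and> cil v \<in> I2}"
  define S where "S = {v\<in>set vs. even (n v) \<and> cil v \<in> I}"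
  define T where "T = {v\<in>IP. even (n v)}"
  have S12: "S1 \<inter> S2 = {}" using I12 unfolding S1_def S2_def by blast
  have ST: "S \<inter> T = {}" using IPvs unfolding S_def T_def by blast
  have vs1sub: "set vs1 - set vs \<subseteq> IP" using sv1 sv uvs unfolding IP_def by blast
  have vs2sub: "set vs2 - set vs \<subseteq> IP" using sv2 sv uvs unfolding IP_def by blast
  have SU: "S1 \<union> S2 = S \<union> T"
  proof
    show "S1 \<union> S2 \<subseteq> S \<union> T"
    proof
      fix v assume "v \<in> S1 \<union> S2"
      then have v: "v \<in> set vs1 \<union> set vs2" "even (n v)" "cil v \<in> I" using I1I I2I unfolding S1_def S2_def by blast+
      show "v \<in> S \<union> T"
      proof (cases "v \<in> set vs")
        case True then show ?thesis using v unfolding S_def by blast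
      next
        case False then have "v \<in> IP" using v(1) vs1sub vs2sub by blast
        then show ?thesis using v unfolding T_def by blast
      qed
    qed
    show "S \<union> T \<subseteq> S1 \<union> S2"
    proof
      fix v assume "v \<in> S \<union> T"
      then show "v \<in> S1 \<union> S2"
      proof
        assume v: "v \<in> S"
        then have vv: "v \<in> set vs" "even (n v)" "cil v \<in> I" unfolding S_def by blast+
        have vV: "v \<in> V" using vv(1) cycle_V[OF c] by blast
        show ?thesis
        proof (cases "cil v \<in> I1")
          case True
          then have "v \<in> set vs1" using notin1[OF vv(1)] by blast
          then show ?thesis using True vv unfolding S1_def by blast
        next
          case False
          then have i2: "cil v \<in> I2" using cil_split[OF vV vv(3)] by blast
          then have "v \<in> set vs2" using notin2[OF vv(1)] by blast
          then show ?thesis using i2 vv unfolding S2_def by blast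
        qed
      next
        assume v: "v \<in> T"
        then have vv: "v \<in> IP" "even (n v)" unfolding T_def by blast+
        have vV: "v \<in> V" using vv(1) IPV by blast
        have vP: "v \<in> set vs1" "v \<in> set vs2" using vv(1) sv1 sv2 unfolding IP_def by blast+
        show ?thesis using cil_split[OF vV IPcil[OF vv(1)]] vP vv unfolding S1_def S2_def by blast
      qed
    qed
  qed
  have finS: "finite S1" "finite S2" "finite S" "finite T" unfolding S1_def S2_def S_def T_def using fin by simp_all
  have kk: "card S1 + card S2 = card S + card T"
  proof -
    have "card S1 + card S2 = card (S1 \<union> S2)" using card_Un_disjoint[OF finS(1,2) S12] by simp
    also have "\<dots> = card (S \<union> T)" using SU by simp
    also have "\<dots> = card S + card T" using card_Un_disjoint[OF finS(3,4) ST] by simp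
    finally show ?thesis .
  qed
  define NS where "NS = {v\<in>V. pos v \<in> I}"
  define NS1 where "NS1 = {v\<in>V. pos v \<in> I1}"
  define NS2 where "NS2 = {v\<in>V. pos v \<in> I2}"
  have NSU: "NS = NS1 \<union> NS2 \<union> IP"
  proof
    show "NS \<subseteq> NS1 \<union> NS2 \<union> IP"
    proof
      fix v assume "v \<in> NS"
      then have v: "v \<in> V" "pos v \<in> I" unfolding NS_def by blast+
      show "v \<in> NS1 \<union> NS2 \<union> IP"
      proof (cases "pos v \<in> Po")
        case True
        then have "v \<in> set vsP" "pos v \<noteq> pos u" "pos v \<noteq> pos w" using HP[OF v(1)] unfolding Po_def by blast+
        then have "v \<in> IP" unfolding IP_def by auto
        then show ?thesis by blast
      next
        case False then show ?thesis using v Idec unfolding NS1_def NS2_def by blast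
      qed
    qed
    show "NS1 \<union> NS2 \<union> IP \<subseteq> NS"
      using I1I I2I IPpos PoI IPV unfolding NS_def NS1_def NS2_def by blast
  qed
  have finV': "finite NS1" "finite NS2" unfolding NS1_def NS2_def using finV by simp_all
  have d12: "NS1 \<inter> NS2 = {}" using I12 unfolding NS1_def NS2_def by blast
  have dIP: "(NS1 \<union> NS2) \<inter> IP = {}"
  proof -
    have "v \<in> IP \<Longrightarrow> pos v \<in> imP" for v using IPpos unfolding Po_def by blast
    moreover have "imP \<inter> I1 = {}" "imP \<inter> I2 = {}" using IJ(2,3) J1 J2 by blast+
    ultimately show ?thesis unfolding NS1_def NS2_def by blast
  qed
  have NN: "(\<Sum>v\<in>NS. n v) = (\<Sum>v\<in>NS1. n v) + (\<Sum>v\<in>NS2. n v) + (\<Sum>v\<in>IP. n v)"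
  proof -
    have "(\<Sum>v\<in>NS. n v) = (\<Sum>v\<in>NS1 \<union> NS2. n v) + (\<Sum>v\<in>IP. n v)"
      unfolding NSU by (rule sum.union_disjoint) (use finV' fin dIP in auto)
    also have "(\<Sum>v\<in>NS1 \<union> NS2. n v) = (\<Sum>v\<in>NS1. n v) + (\<Sum>v\<in>NS2. n v)"
      by (rule sum.union_disjoint) (use finV' d12 in auto)
    finally show ?thesis .
  qed
  have par: "even (card T + (\<Sum>v\<in>IP. n v) + card IP)" unfolding T_def by (rule parity_sum[OF fin])
  have cIP: "card IP = length esP - 1"
  proof -
    have "card (set vsP) = Suc (length esP)" using distinct_card[OF walk_distinct(1)[OF wP]] lP by simp
    moreover have "card {u, w} = 2" using uw by simp
    moreover have "{u, w} \<subseteq> set vsP" using uP wPin by blast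
    ultimately show ?thesis unfolding IP_def by (simp add: card_Diff_subset)
  qed
  have lens: "length es1 = length esA + length esP" "length es2 = length esP + length esB"
    "length es = length esA + length esB" unfolding es1_def es2_def esA_def esB_def using bl' by simp_all
  have ev: "even (length es)" "even (length es1)" "even (length es2)"
    using cycle_even[OF c] cycle_even[OF c1] cycle_even[OF c2] by simp_all
  have pos_p: "length esP \<ge> 1" using neP by (cases esP) auto
  have eP: "set esP \<subseteq> E" by (rule walk_distinct(3)[OF wP])
  have dAB: "set esA \<inter> set esB = {}" using s(5) .
  have eA: "set esA \<subseteq> set es" "set esB \<subseteq> set es" using s(11) by auto
  have pr1: "(\<Prod>e\<in>set es1. \<epsilon> e) = (\<Prod>e\<in>set esA. \<epsilon> e) * (\<Prod>e\<in>set esP. \<epsilon> e)"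
    unfolding es1_def set_append set_rev by (rule prod.union_disjoint) (use dE eA in auto)
  have pr2: "(\<Prod>e\<in>set es2. \<epsilon> e) = (\<Prod>e\<in>set esP. \<epsilon> e) * (\<Prod>e\<in>set esB. \<epsilon> e)"
    unfolding es2_def set_append by (rule prod.union_disjoint) (use dE eA in auto)
  have pr: "(\<Prod>e\<in>set es. \<epsilon> e) = (\<Prod>e\<in>set esA. \<epsilon> e) * (\<Prod>e\<in>set esB. \<epsilon> e)"
    unfolding s(11)[symmetric] by (rule prod.union_disjoint) (use dAB in auto)
  have prs: "(\<Prod>e\<in>set es. \<epsilon> e) = (\<Prod>e\<in>set es1. \<epsilon> e) * (\<Prod>e\<in>set es2. \<epsilon> e)"
  proof -
    have "(\<Prod>e\<in>set es1. \<epsilon> e) * (\<Prod>e\<in>set es2. \<epsilon> e) =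
          (\<Prod>e\<in>set esA. \<epsilon> e) * (\<Prod>e\<in>set esB. \<epsilon> e) * ((\<Prod>e\<in>set esP. \<epsilon> e) * (\<Prod>e\<in>set esP. \<epsilon> e))"
      unfolding pr1 pr2 by (simp add: algebra_simps)
    then show ?thesis using prod_sq[OF eP] pr by simp
  qed
  obtain e1 where e1: "e1 \<in> set esP" using neP by (cases esP) auto
  have e1E: "e1 \<in> E" using e1 eP by blast
  have e1I: "path_image (g e1) \<inter> I \<noteq> {}"
  proof -
    have "g e1 (1/2) \<in> imP" using mid_not_vertex(1)[OF e1E] e1 unfolding imP_def by blast
    moreover have "g e1 (1/2) \<noteq> pos u" "g e1 (1/2) \<noteq> pos w" using mid_not_vertex(2)[OF e1E] uV wV by auto
    ultimately have "g e1 (1/2) \<in> I" using PoI unfolding Po_def by blast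
    then show ?thesis using mid_not_vertex(1)[OF e1E] by blast
  qed
  have e1J: "path_image (g e1) \<subseteq> cycle_image g es1" "path_image (g e1) \<subseteq> cycle_image g es2"
    using e1 J1 J2 unfolding imP_def by blast+
  have finM: "finite {e\<in>E. path_image (g e) \<inter> I \<noteq> {}}" using finE by simp
  have mu1: "mu es1 < mu es"
  proof -
    have "{e\<in>E. path_image (g e) \<inter> I1 \<noteq> {}} \<subset> {e\<in>E. path_image (g e) \<inter> I \<noteq> {}}"
    proof
      show "{e\<in>E. path_image (g e) \<inter> I1 \<noteq> {}} \<subseteq> {e\<in>E. path_image (g e) \<inter> I \<noteq> {}}" using I1I by blast
      have "e1 \<notin> {e\<in>E. path_image (g e) \<inter> I1 \<noteq> {}}" using e1J(1) IJ(2) by blast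
      then show "{e\<in>E. path_image (g e) \<inter> I1 \<noteq> {}} \<noteq> {e\<in>E. path_image (g e) \<inter> I \<noteq> {}}" using e1E e1I by blast
    qed
    then show ?thesis unfolding mu_def I1_def[symmetric] I_def[symmetric] by (rule psubset_card_mono[OF finM])
  qed
  have mu2: "mu es2 < mu es"
  proof -
    have "{e\<in>E. path_image (g e) \<inter> I2 \<noteq> {}} \<subset> {e\<in>E. path_image (g e) \<inter> I \<noteq> {}}"
    proof
      show "{e\<in>E. path_image (g e) \<inter> I2 \<noteq> {}} \<subseteq> {e\<in>E. path_image (g e) \<inter> I \<noteq> {}}" using I2I by blast
      have "e1 \<notin> {e\<in>E. path_image (g e) \<inter> I2 \<noteq> {}}" using e1J(2) IJ(3) by blast
      then show "{e\<in>E. path_image (g e) \<inter> I2 \<noteq> {}} \<noteq> {e\<in>E. path_image (g e) \<inter> I \<noteq> {}}" using e1E e1I by blast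
    qed
    then show ?thesis unfolding mu_def I2_def[symmetric] I_def[symmetric] by (rule psubset_card_mono[OF finM])
  qed
  have comb: "Phi vs es" if p1: "Phi vs1 es1" and p2: "Phi vs2 es2"
  proof -
    have q1: "(\<Prod>e\<in>set es1. \<epsilon> e) = (-1) ^ (length es1 div 2 + 1 + card S1 + (\<Sum>v\<in>NS1. n v))"
      using p1 unfolding Phi_def S1_def NS1_def I1_def .
    have q2: "(\<Prod>e\<in>set es2. \<epsilon> e) = (-1) ^ (length es2 div 2 + 1 + card S2 + (\<Sum>v\<in>NS2. n v))"
      using p2 unfolding Phi_def S2_def NS2_def I2_def .
    have "even ((length es1 div 2 + 1 + card S1 + (\<Sum>v\<in>NS1. n v)) + (length es2 div 2 + 1 + card S2 + (\<Sum>v\<in>NS2. n v))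
             + (length es div 2 + 1 + card S + (\<Sum>v\<in>NS. n v)))"
      using kk NN par cIP lens ev pos_p by presburger
    then have "(-1::int) ^ ((length es1 div 2 + 1 + card S1 + (\<Sum>v\<in>NS1. n v)) + (length es2 div 2 + 1 + card S2 + (\<Sum>v\<in>NS2. n v)))
             = (-1) ^ (length es div 2 + 1 + card S + (\<Sum>v\<in>NS. n v))"
      by (rule neg1_pow_eq)
    then have "(\<Prod>e\<in>set es. \<epsilon> e) = (-1) ^ (length es div 2 + 1 + card S + (\<Sum>v\<in>NS. n v))"
      unfolding prs q1 q2 power_add[symmetric] .
    then show ?thesis unfolding Phi_def S_def NS_def I_def .
  qed
  show ?thesis using c1 c2 mu1 mu2 comb by blast
qed

end

context kpg begin

lemma mu_cong: "set es' = set es \<Longrightarrow> mu es' = mu es"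
  unfolding mu_def cycle_image_def by simp

lemma main_phi:
  assumes "simple_cycle E bl wh vs es"
  shows "Phi vs es"
  using assms
proof (induction "mu es" arbitrary: vs es rule: less_induct)
  case less
  note c = less.prems
  show ?case
  proof (cases "inside (cycle_image g es) \<inter> G = {}")
    case True then show ?thesis by (rule base_case[OF c])
  next
    case False
    obtain vsP esP where wP: "walk E bl wh vsP esP" and neP: "esP \<noteq> []" and dE: "set esP \<inter> set es = {}"
      and vI: "set vsP \<inter> set vs = {hd vsP, last vsP}"
      and img: "(\<Union>e\<in>set esP. path_image (g e)) - {pos (hd vsP), pos (last vsP)} \<subseteq> inside (cycle_image g es)"
      using find_chord[OF c False] by blast
    have "vsP \<noteq> []" using wP by (auto simp: walk_def)
    then have "hd vsP \<in> set vs" using vI by auto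
    then obtain a where a: "a < length vs" "vs!a = hd vsP" by (auto simp: in_set_conv_nth)
    have "length vs = length es" using c by (simp add: simple_cycle_def)
    then obtain vs' es' where c': "simple_cycle E bl wh vs' es'" and sv: "set vs' = set vs"
      and se: "set es' = set es" and le: "length es' = length es" and hv: "hd vs' = vs!a"
      using cycle_rotate[OF c] a(1) by metis
    have ci: "cycle_image g es' = cycle_image g es" using se by (simp add: cycle_image_def)
    obtain vs1 es1 vs2 es2 where c1: "simple_cycle E bl wh vs1 es1" and c2: "simple_cycle E bl wh vs2 es2"
      and m1: "mu es1 < mu es'" and m2: "mu es2 < mu es'" and imp: "Phi vs1 es1 \<longrightarrow> Phi vs2 es2 \<longrightarrow> Phi vs' es'"
      using step_phi[OF c' wP neP] dE vI img sv se ci hv a(2) by (metis (no_types, lifting))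
    have "mu es' = mu es" by (rule mu_cong[OF se])
    then have "Phi vs1 es1" "Phi vs2 es2" using less.hyps c1 c2 m1 m2 by auto
    then have "Phi vs' es'" using imp by blast
    then show ?thesis using Phi_cong[OF sv se le] by blast
  qed
qed

end

theorem lemma1:
  fixes B W :: "'v set" and E :: "'e set" and bl wh :: "'e \<Rightarrow> 'v"
    and pos :: "'v \<Rightarrow> complex" and g :: "'e \<Rightarrow> real \<Rightarrow> complex"
    and n :: "'v \<Rightarrow> nat" and cil :: "'v \<Rightarrow> complex" and \<epsilon> :: "'e \<Rightarrow> int"
    and vs :: "'v list" and es :: "'e list"
  assumes "plane_bipartite_graph B W E bl wh pos g"
    and "bounded_faces_simple B W E bl wh pos g"
    and "\<forall>v\<in>B \<union> W. n v > 0"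
    and "valid_cilia (B \<union> W) E pos g cil"
    and "kasteleyn (B \<union> W) E pos g n cil \<epsilon>"
    and "simple_cycle E bl wh vs es"
  shows "(\<Prod>e\<in>set es. \<epsilon> e) =
           (-1) ^ (length es div 2 + 1
                   + card {v\<in>set vs. even (n v) \<and> cil v \<in> inside (cycle_image g es)}
                   + (\<Sum>v\<in>{v\<in>B \<union> W. pos v \<in> inside (cycle_image g es)}. n v))"
proof -
  interpret k: kpg B W E bl wh pos g n cil \<epsilon>
  proof (unfold_locales)
    show "plane_bipartite_graph B W E bl wh pos g" by (rule assms(1))
    show "bounded_faces_simple B W E bl wh pos g" by (rule assms(2))
    show "valid_cilia (B \<union> W) E pos g cil" by (rule assms(4))
    show "kasteleyn (B \<union> W) E pos g n cil \<epsilon>" by (rule assms(5))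
  qed
  have "k.Phi vs es" by (rule k.main_phi[OF assms(6)])
  then show ?thesis unfolding k.Phi_def .
qed

end
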